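(* Let $a,b>0$ and $N\ge1$. For $j=0,1,2,\ldots$ put $$\varphi_j^{(4)}(x)=\frac{P_j^{(a-1,b-1)}(x)}{\sqrt{h_j^{(a-1,b-1)}}}(1-x)^{\frac a2-1}(1+x)^{\frac b2-1},\qquad x\in(-1,1),$$ and define $$\psi_{2j+1}^{(4)}(x)=\frac{1}{\sqrt2}(1-x^2)\varphi_{2j+1}^{(4)}(x),\qquad \psi_{2j}^{(4)}(x)=-\frac{1}{\sqrt2}\,\varepsilon\varphi_{2j+1}^{(4)}(x).$$ Let $M^{(4)}$ be the $2N\times 2N$ matrix with entries $M^{(4)}_{jk}=\int_{-1}^1\big(\psi_j^{(4)}(x)\frac{d}{dx}\psi_k^{(4)}(x)-\psi_k^{(4)}(x)\frac{d}{dx}\psi_j^{(4)}(x)\big)dx$, $j,k=0,\ldots,2N-1$, let $(\mu_{jk})_{j,k=0}^{2N-1}=(M^{(4)})^{-1}$, and $$K_N^{(4)}(x,y)=-\sum_{j,k=0}^{2N-1}\mu_{jk}\psi_j^{(4)}(x)\frac{d}{dy}\psi_k^{(4)}(y).$$ Then $$K_N^{(4)}(x,y)=\frac12S_N^{(4)}(x,y)+\frac12C_{2N}^{(4)}\,\varepsilon\varphi_{2N+1}^{(4)}(x)\,\varphi_{2N}^{(4)}(y),$$ where $$C_{2N}^{(4)}=\sqrt{\frac{(2N+1)(2N+a)(2N+b)(2N+a+b-1)}{(4N+a+b+1)(4N+a+b-1)}},\qquad S_N^{(4)}(x,y)=\sum_{j=0}^{2N}(1-x^2)\varphi_j^{(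4)}(x)\varphi_j^{(4)}(y).$$
   Context: $P_j^{(\alpha,\beta)}$ is the Jacobi polynomial of degree $j$ (Szegő normalization) with $\int_{-1}^1P_j^{(\alpha,\beta)}P_k^{(\alpha,\beta)}(1-x)^{\alpha}(1+x)^{\beta}dx=h_j^{(\alpha,\beta)}\delta_{jk}$, $h_j^{(\alpha,\beta)}=\frac{2^{\alpha+\beta+1}\Gamma(j+\alpha+1)\Gamma(j+\beta+1)}{j!(2j+\alpha+\beta+1)\Gamma(j+\alpha+\beta+1)}$. The operator $\varepsilon$ acts on integrable functions $g$ on $[-1,1]$ by $\varepsilon g(x)=\int_{-1}^1\frac12\mathrm{sgn}(x-y)g(y)\,dy=\frac12\left(\int_{-1}^x g(y)dy-\int_x^1 g(y)dy\right)$. *)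

theory Defs
  imports "HOL-Analysis.Analysis"
begin

text \<open>Jacobi polynomial, Szego normalization (explicit sum, Szego (4.3.2)).\<close>
definition jacobiP :: "nat \<Rightarrow> real \<Rightarrow> real \<Rightarrow> real \<Rightarrow> real" where
  "jacobiP n al be x =
     (\<Sum>s\<le>n. ((real n + al) gchoose (n - s)) * ((real n + be) gchoose s)
              * ((x - 1) / 2) ^ s * ((x + 1) / 2) ^ (n - s))"

definition jacobi_h :: "nat \<Rightarrow> real \<Rightarrow> real \<Rightarrow> real" where
  "jacobi_h j al be =
     (LBINT x=ereal (-1)..ereal 1. (jacobiP j al be x)\<^sup>2 * (1 - x) powr al * (1 + x) powr be)"

definition eps_op :: "(real \<Rightarrow> real) \<Rightarrow> real \<Rightarrow> real" where
  "eps_op g x = (1/2) * ((LBINT y=ereal (-1)..ereal x. g y) - (LBINT y=ereal x..ereal 1. g y))"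

definition phi4 :: "real \<Rightarrow> real \<Rightarrow> nat \<Rightarrow> real \<Rightarrow> real" where
  "phi4 a b j x = jacobiP j (a - 1) (b - 1) x / sqrt (jacobi_h j (a - 1) (b - 1))
                  * (1 - x) powr (a / 2 - 1) * (1 + x) powr (b / 2 - 1)"

definition psi4 :: "real \<Rightarrow> real \<Rightarrow> nat \<Rightarrow> real \<Rightarrow> real" where
  "psi4 a b n x =
     (if odd n then (1 / sqrt 2) * (1 - x\<^sup>2) * phi4 a b n x
      else - (1 / sqrt 2) * eps_op (phi4 a b (n + 1)) x)"

definition M4 :: "real \<Rightarrow> real \<Rightarrow> nat \<Rightarrow> nat \<Rightarrow> real" where
  "M4 a b j k = (LBINT x=ereal (-1)..ereal 1.
        psi4 a b j x * deriv (psi4 a b k) x - psi4 a b k x * deriv (psi4 a b j) x)"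

definition is_inverse_matrix :: "nat \<Rightarrow> (nat \<Rightarrow> nat \<Rightarrow> real) \<Rightarrow> (nat \<Rightarrow> nat \<Rightarrow> real) \<Rightarrow> bool" where
  "is_inverse_matrix n A mu \<longleftrightarrow>
     (\<forall>i<n. \<forall>l<n. (\<Sum>k<n. A i k * mu k l) = (if i = l then 1 else 0)) \<and>
     (\<forall>i<n. \<forall>l<n. (\<Sum>k<n. mu i k * A k l) = (if i = l then 1 else 0))"

definition K4 :: "real \<Rightarrow> real \<Rightarrow> nat \<Rightarrow> (nat \<Rightarrow> nat \<Rightarrow> real) \<Rightarrow> real \<Rightarrow> real \<Rightarrow> real" where
  "K4 a b N mu x y = - (\<Sum>j<2*N. \<Sum>k<2*N. mu j k * psi4 a b j x * deriv (psi4 a b k) y)"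

definition C4 :: "real \<Rightarrow> real \<Rightarrow> nat \<Rightarrow> real" where
  "C4 a b N = sqrt ((2*N+1) * (2*N+a) * (2*N+b) * (2*N+a+b-1)
                    / ((4*N+a+b+1) * (4*N+a+b-1)))"

definition S4 :: "real \<Rightarrow> real \<Rightarrow> nat \<Rightarrow> real \<Rightarrow> real \<Rightarrow> real" where
  "S4 a b N x y = (\<Sum>j\<le>2*N. (1 - x\<^sup>2) * phi4 a b j x * phi4 a b j y)"

end

theory Submission
  imports Defs "HOL-Computational_Algebra.Polynomial" "HOL-Computational_Algebra.Formal_Power_Series"
begin


definition rho :: "real \<Rightarrow> real \<Rightarrow> real \<Rightarrow> real" where
  "rho s t x = (1 - x) powr s * (1 + x) powr t"

lemma rho_meas[measurable]: "rho s t \<in> borel_measurable borel"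
  unfolding rho_def by measurable

lemma DERIV_1px_powr:
  assumes "x > -1"
  shows "((\<lambda>x. (1 + x) powr r) has_real_derivative r * (1 + x) powr (r - 1)) (at x)"
  using assms by (auto intro!: derivative_eq_intros)

lemma DERIV_1mx_powr:
  assumes "x < 1"
  shows "((\<lambda>x. (1 - x) powr r) has_real_derivative - r * (1 - x) powr (r - 1)) (at x)"
  using assms by (auto intro!: derivative_eq_intros)

lemma int_1px:
  assumes "t > -1"
  shows "set_integrable lborel {-1<..<1::real} (\<lambda>x. (1 + x) powr t)"
proof -
  have "set_integrable lborel (einterval (ereal (-1)) (ereal 1)) (\<lambda>x. (1 + x) powr t)"
  proof (rule interval_integral_FTC_nonneg(1)[where F = "\<lambda>x. (1 + x) powr (t+1) / (t+1)"
        and A = 0 and B = "2 powr (t+1) / (t+1)"])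
    show "ereal (-1) < ereal 1" by simp
    fix x assume x: "ereal (-1) < ereal x" "ereal x < ereal 1"
    then have "1 + x > 0" by simp
    have d: "((\<lambda>x. (1 + x) powr (t+1)) has_real_derivative (t+1) * (1 + x) powr (t + 1 - 1)) (at x)"
      using x by (intro DERIV_1px_powr) simp
    have "((\<lambda>x. (1 + x) powr (t+1) / (t+1)) has_real_derivative (t+1) * (1 + x) powr (t + 1 - 1) / (t+1)) (at x)"
      by (intro DERIV_cdivide d)
    then show "((\<lambda>x. (1 + x) powr (t+1) / (t+1)) has_real_derivative (1 + x) powr t) (at x)"
      using assms by simp
    show "isCont (\<lambda>x. (1 + x) powr t) x" using \<open>1 + x > 0\<close> by (auto intro!: continuous_intros)
  next
    show "AE x in lborel. ereal (-1) < ereal x \<longrightarrow> ereal x < ereal 1 \<longrightarrow> 0 \<le> (1 + x) powr t"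
      by simp
    show "(((\<lambda>x. (1 + x) powr (t+1) / (t+1)) \<circ> real_of_ereal) \<longlongrightarrow> 0) (at_right (ereal (-1)))"
      unfolding ereal_tendsto_simps1
      using assms
      by (auto intro!: tendsto_eq_intros eventually_at_rightI[where b=0])
    show "(((\<lambda>x. (1 + x) powr (t+1) / (t+1)) \<circ> real_of_ereal) \<longlongrightarrow> 2 powr (t+1) / (t+1)) (at_left (ereal 1))"
      unfolding ereal_tendsto_simps1
      using assms
      by (auto intro!: tendsto_eq_intros)
  qed
  then show ?thesis by simp
qed

lemma int_1mx:
  assumes "s > -1"
  shows "set_integrable lborel {-1<..<1::real} (\<lambda>x. (1 - x) powr s)"
proof -
  have "set_integrable lborel (einterval (ereal (-1)) (ereal 1)) (\<lambda>x. (1 - x) powr s)"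
  proof (rule interval_integral_FTC_nonneg(1)[where F = "\<lambda>x. - ((1 - x) powr (s+1)) / (s+1)"
        and B = 0 and A = "-(2 powr (s+1) / (s+1))"])
    show "ereal (-1) < ereal 1" by simp
    fix x assume x: "ereal (-1) < ereal x" "ereal x < ereal 1"
    then have "1 - x > 0" by simp
    have d: "((\<lambda>x. (1 - x) powr (s+1)) has_real_derivative - (s+1) * (1 - x) powr (s + 1 - 1)) (at x)"
      using x by (intro DERIV_1mx_powr) simp
    have "((\<lambda>x. - ((1 - x) powr (s+1)) / (s+1)) has_real_derivative - (- (s+1) * (1 - x) powr (s + 1 - 1)) / (s+1)) (at x)"
      by (intro DERIV_cdivide DERIV_minus d)
    moreover have "- (- (s+1) * (1 - x) powr (s + 1 - 1)) / (s+1) = (1 - x) powr s"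
      using assms by (simp add: field_simps)
    ultimately show "((\<lambda>x. - ((1 - x) powr (s+1)) / (s+1)) has_real_derivative (1 - x) powr s) (at x)"
      by simp
    show "isCont (\<lambda>x. (1 - x) powr s) x" using \<open>1 - x > 0\<close> by (auto intro!: continuous_intros)
  next
    show "AE x in lborel. ereal (-1) < ereal x \<longrightarrow> ereal x < ereal 1 \<longrightarrow> 0 \<le> (1 - x) powr s"
      by simp
    show "(((\<lambda>x. - ((1 - x) powr (s+1)) / (s+1)) \<circ> real_of_ereal) \<longlongrightarrow> 0) (at_left (ereal 1))"
      unfolding ereal_tendsto_simps1
      using assms
      by (auto intro!: tendsto_eq_intros eventually_at_leftI[where a=0])
    show "(((\<lambda>x. - ((1 - x) powr (s+1)) / (s+1)) \<circ> real_of_ereal) \<longlongrightarrow> -(2 powr (s+1) / (s+1))) (at_right (ereal (-1)))"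
      unfolding ereal_tendsto_simps1
      using assms
      by (auto intro!: tendsto_eq_intros)
  qed
  then show ?thesis by simp
qed

lemma powr_le_max: "1 \<le> y \<Longrightarrow> y \<le> 2 \<Longrightarrow> (y::real) powr t \<le> max 1 (2 powr t)"
proof (cases "t \<ge> 0")
  case True
  assume "1 \<le> y" "y \<le> 2"
  then have "y powr t \<le> 2 powr t" using True by (intro powr_mono2) auto
  then show ?thesis by simp
next
  case False
  assume "1 \<le> y" "y \<le> 2"
  then have "y powr t \<le> 1 powr t" using False by (intro powr_mono2') auto
  then show ?thesis by simp
qed

lemma rho_bound:
  assumes "-1 < x" "x < 1"
  shows "rho s t x \<le> max 1 (2 powr t) * (1 - x) powr s + max 1 (2 powr s) * (1 + x) powr t"
proof (cases "x \<ge> 0")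
  case True
  have "(1 + x) powr t \<le> max 1 (2 powr t)" using assms True by (intro powr_le_max) auto
  then have "rho s t x \<le> (1 - x) powr s * max 1 (2 powr t)"
    unfolding rho_def by (intro mult_left_mono) auto
  moreover have "0 \<le> max 1 (2 powr s) * (1 + x) powr t" by simp
  ultimately show ?thesis by (simp add: mult.commute add_increasing2)
next
  case False
  have "(1 - x) powr s \<le> max 1 (2 powr s)" using assms False by (intro powr_le_max) auto
  then have "rho s t x \<le> max 1 (2 powr s) * (1 + x) powr t"
    unfolding rho_def by (intro mult_right_mono) auto
  moreover have "0 \<le> max 1 (2 powr t) * (1 - x) powr s" by simp
  ultimately show ?thesis by (simp add: mult.commute add_increasing)
qed

lemma int_rho_g:
  assumes "s > -1" "t > -1" and g[measurable]: "g \<in> borel_measurable borel"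
    and gb: "\<And>x. -1 < x \<Longrightarrow> x < 1 \<Longrightarrow> \<bar>g x\<bar> \<le> B"
  shows "set_integrable lborel {-1<..<1::real} (\<lambda>x. rho s t x * g x)"
proof (rule set_integrable_bound)
  show "set_integrable lborel {-1<..<1::real}
     (\<lambda>x. B * (max 1 (2 powr t) * (1 - x) powr s + max 1 (2 powr s) * (1 + x) powr t))"
    using int_1px[OF assms(2)] int_1mx[OF assms(1)] by (intro set_integrable_mult_right set_integral_add) auto
  show "set_borel_measurable lborel {-1<..<1} (\<lambda>x. rho s t x * g x)"
    unfolding set_borel_measurable_def by measurable
  show "AE x in lborel. x \<in> {-1<..<1} \<longrightarrow> norm (rho s t x * g x) \<le>
     norm (B * (max 1 (2 powr t) * (1 - x) powr s + max 1 (2 powr s) * (1 + x) powr t))"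
  proof (intro AE_I2 impI)
    fix x :: real assume x: "x \<in> {-1<..<1}"
    have r0: "0 \<le> rho s t x" by (simp add: rho_def)
    have "norm (rho s t x * g x) = rho s t x * \<bar>g x\<bar>" using r0 by (simp add: abs_mult)
    also have "\<dots> \<le> (max 1 (2 powr t) * (1 - x) powr s + max 1 (2 powr s) * (1 + x) powr t) * B"
      using rho_bound[of x s t] x gb[of x] r0 by (intro mult_mono) auto
    also have "\<dots> \<le> norm (B * (max 1 (2 powr t) * (1 - x) powr s + max 1 (2 powr s) * (1 + x) powr t))"
      by (simp add: mult.commute)
    finally show "norm (rho s t x * g x) \<le> norm (B * (max 1 (2 powr t) * (1 - x) powr s + max 1 (2 powr s) * (1 + x) powr t))" .
  qed
qed

lemma ftc_Ioo:
  fixes F f :: "real \<Rightarrow> real"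
  assumes ab: "a < b"
    and F: "\<And>x. a < x \<Longrightarrow> x < b \<Longrightarrow> (F has_real_derivative f x) (at x)"
    and c: "\<And>x. a < x \<Longrightarrow> x < b \<Longrightarrow> isCont f x"
    and i: "set_integrable lborel {a<..<b} f"
    and A: "(F \<longlongrightarrow> A) (at_right a)" and B: "(F \<longlongrightarrow> B) (at_left b)"
  shows "(LBINT x=ereal a..ereal b. f x) = B - A"
proof (rule interval_integral_FTC_integrable)
  show "ereal a < ereal b" using ab by simp
  fix x assume "ereal a < ereal x" "ereal x < ereal b"
  then have "a < x" "x < b" by auto
  then show "(F has_vector_derivative f x) (at x)"
    using F has_real_derivative_iff_has_vector_derivative by blast
  show "isCont f x" using c \<open>a < x\<close> \<open>x < b\<close> by blast
next
  show "set_integrable lborel (einterval (ereal a) (ereal b)) f" using i by simp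
  show "((F \<circ> real_of_ereal) \<longlongrightarrow> A) (at_right (ereal a))"
    unfolding ereal_tendsto_simps1 by (rule A)
  show "((F \<circ> real_of_ereal) \<longlongrightarrow> B) (at_left (ereal b))"
    unfolding ereal_tendsto_simps1 by (rule B)
qed

lemma eps_op_FTC:
  fixes F f :: "real \<Rightarrow> real"
  assumes F: "\<And>x. -1 < x \<Longrightarrow> x < 1 \<Longrightarrow> (F has_real_derivative f x) (at x)"
    and c: "\<And>x. -1 < x \<Longrightarrow> x < 1 \<Longrightarrow> isCont f x"
    and i: "set_integrable lborel {-1<..<1} f"
    and A: "(F \<longlongrightarrow> 0) (at_right (-1))" and B: "(F \<longlongrightarrow> 0) (at_left 1)"
    and x: "-1 < x" "x < 1"
  shows "eps_op f x = F x"
proof -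
  have "isCont F x" using F[OF x] by (rule DERIV_isCont)
  then have Fx: "(F \<longlongrightarrow> F x) (at x)" by (simp add: isCont_def)
  have 1: "(LBINT y=ereal (-1)..ereal x. f y) = F x - 0"
  proof (rule ftc_Ioo)
    show "-1 < x" using x by simp
    show "set_integrable lborel {-1<..<x} f"
      by (rule set_integrable_subset[OF i]) (use x in auto)
    show "(F \<longlongrightarrow> F x) (at_left x)" using Fx by (rule tendsto_mono[rotated]) (simp add: at_le)
  qed (use F c A x in auto)
  have 2: "(LBINT y=ereal x..ereal 1. f y) = 0 - F x"
  proof (rule ftc_Ioo)
    show "x < 1" using x by simp
    show "set_integrable lborel {x<..<1} f"
      by (rule set_integrable_subset[OF i]) (use x in auto)
    show "(F \<longlongrightarrow> F x) (at_right x)" using Fx by (rule tendsto_mono[rotated]) (simp add: at_le)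
  qed (use F c B x in auto)
  show ?thesis unfolding eps_op_def 1 2 by simp
qed

lemma rho_pos: "-1 < x \<Longrightarrow> x < 1 \<Longrightarrow> 0 < rho s t x"
  by (simp add: rho_def)

lemma rho_mult: "-1 < x \<Longrightarrow> x < 1 \<Longrightarrow> rho s t x * rho s' t' x = rho (s + s') (t + t') x"
  by (simp add: rho_def powr_add)

lemma rho_1mx: "-1 < x \<Longrightarrow> x < 1 \<Longrightarrow> rho s t x * (1 - x) = rho (s + 1) t x"
  by (simp add: rho_def powr_add)

lemma rho_1px: "-1 < x \<Longrightarrow> x < 1 \<Longrightarrow> rho s t x * (1 + x) = rho s (t + 1) x"
  by (simp add: rho_def powr_add)

lemma rho_1mx2: "-1 < x \<Longrightarrow> x < 1 \<Longrightarrow> rho s t x * (1 - x\<^sup>2) = rho (s + 1) (t + 1) x"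
proof -
  assume x: "-1 < x" "x < 1"
  have "rho s t x * (1 - x\<^sup>2) = (rho s t x * (1 - x)) * (1 + x)" by (simp add: power2_eq_square algebra_simps)
  also have "\<dots> = rho (s + 1) (t + 1) x" using x by (simp add: rho_1mx rho_1px)
  finally show ?thesis .
qed

lemma DERIV_rho_g:
  assumes x: "-1 < x" "x < 1" and g: "(g has_real_derivative g') (at x)"
  shows "((\<lambda>x. rho s t x * g x) has_real_derivative
           rho (s - 1) (t - 1) x * ((1 - x\<^sup>2) * g' + (t * (1 - x) - s * (1 + x)) * g x)) (at x)"
proof -
  have d1: "((\<lambda>x. (1 - x) powr s) has_real_derivative - s * (1 - x) powr (s - 1)) (at x)"
    using x by (intro DERIV_1mx_powr) simp
  have d2: "((\<lambda>x. (1 + x) powr t) has_real_derivative t * (1 + x) powr (t - 1)) (at x)"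
    using x by (intro DERIV_1px_powr) simp
  have "((\<lambda>x. (1 - x) powr s * (1 + x) powr t * g x) has_real_derivative
      ((1 - x) powr s * (1 + x) powr t) * g' + ((1 - x) powr s * (t * (1 + x) powr (t - 1))
        + (- s * (1 - x) powr (s - 1)) * (1 + x) powr t) * g x) (at x)"
    by (intro DERIV_mult' d1 d2 g)
  moreover have e1: "(1 - x) powr s = (1 - x) powr (s - 1) * (1 - x)"
    using x powr_add[of "1 - x" "s - 1" 1] by simp
  moreover have e2: "(1 + x) powr t = (1 + x) powr (t - 1) * (1 + x)"
    using x powr_add[of "1 + x" "t - 1" 1] by simp
  ultimately have "((\<lambda>x. (1 - x) powr s * (1 + x) powr t * g x) has_real_derivative
      ((1 - x) powr (s - 1) * (1 - x) * ((1 + x) powr (t - 1) * (1 + x))) * g' + ((1 - x) powr (s - 1) * (1 - x) * (t * (1 + x) powr (t - 1))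
        + (- s * (1 - x) powr (s - 1)) * ((1 + x) powr (t - 1) * (1 + x))) * g x) (at x)"
    by simp
  moreover have "((1 - x) powr (s - 1) * (1 - x) * ((1 + x) powr (t - 1) * (1 + x))) * g' + ((1 - x) powr (s - 1) * (1 - x) * (t * (1 + x) powr (t - 1))
        + (- s * (1 - x) powr (s - 1)) * ((1 + x) powr (t - 1) * (1 + x))) * g x
      = rho (s - 1) (t - 1) x * ((1 - x\<^sup>2) * g' + (t * (1 - x) - s * (1 + x)) * g x)"
    unfolding rho_def by (simp add: power2_eq_square algebra_simps)
  ultimately show ?thesis unfolding rho_def by simp
qed

lemma rho_tendsto_right:
  assumes "t > 0" "(g \<longlongrightarrow> L) (at_right (-1))"
  shows "((\<lambda>x. rho s t x * g x) \<longlongrightarrow> 0) (at_right (-1))"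
proof -
  have "((\<lambda>x. (1 - x) powr s * (1 + x) powr t * g x) \<longlongrightarrow> 2 powr s * 0 powr t * L) (at_right (-1))"
    using assms
    by (intro tendsto_intros tendsto_powr') (auto intro!: tendsto_eq_intros eventually_at_rightI[where b=0])
  then show ?thesis unfolding rho_def using assms by simp
qed

lemma rho_tendsto_left:
  assumes "s > 0" "(g \<longlongrightarrow> L) (at_left 1)"
  shows "((\<lambda>x. rho s t x * g x) \<longlongrightarrow> 0) (at_left 1)"
proof -
  have "((\<lambda>x. (1 - x) powr s * (1 + x) powr t * g x) \<longlongrightarrow> 0 powr s * 2 powr t * L) (at_left 1)"
    using assms
    by (intro tendsto_intros tendsto_powr') (auto intro!: tendsto_eq_intros eventually_at_leftI[where a=0])
  then show ?thesis unfolding rho_def using assms by simp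
qed

lemma poly_meas[measurable]: "(\<lambda>x. poly (p::real poly) x) \<in> borel_measurable borel"
  using continuous_on_poly[OF continuous_on_id[of UNIV], of p]
  by (intro borel_measurable_continuous_onI) simp

lemma poly_bound:
  fixes p :: "real poly"
  assumes "\<bar>x\<bar> \<le> 1"
  shows "\<bar>poly p x\<bar> \<le> (\<Sum>i\<le>degree p. \<bar>coeff p i\<bar>)"
proof -
  have "\<bar>poly p x\<bar> = \<bar>\<Sum>i\<le>degree p. coeff p i * x ^ i\<bar>" by (simp add: poly_altdef)
  also have "\<dots> \<le> (\<Sum>i\<le>degree p. \<bar>coeff p i * x ^ i\<bar>)" by (rule sum_abs)
  also have "\<dots> \<le> (\<Sum>i\<le>degree p. \<bar>coeff p i\<bar>)"
  proof (rule sum_mono)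
    fix i
    have "\<bar>x ^ i\<bar> \<le> 1" using assms by (simp add: power_abs power_le_one)
    then show "\<bar>coeff p i * x ^ i\<bar> \<le> \<bar>coeff p i\<bar>"
      by (simp add: abs_mult mult_left_le)
  qed
  finally show ?thesis .
qed

lemma int_rho_poly:
  assumes "s > -1" "t > -1"
  shows "set_integrable lborel {-1<..<1::real} (\<lambda>x. rho s t x * poly p x)"
  by (rule int_rho_g[OF assms, where B = "\<Sum>i\<le>degree p. \<bar>coeff p i\<bar>"])
     (auto intro!: poly_bound)

definition ip :: "real \<Rightarrow> real \<Rightarrow> real poly \<Rightarrow> real" where
  "ip s t p = (LINT x:{-1<..<1}|lborel. rho s t x * poly p x)"

lemma ip_LBINT: "ip s t p = (LBINT x=ereal (-1)..ereal 1. rho s t x * poly p x)"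
  unfolding ip_def by (simp add: interval_integral_Ioo)

lemma ip_add: "s > -1 \<Longrightarrow> t > -1 \<Longrightarrow> ip s t (p + q) = ip s t p + ip s t q"
  unfolding ip_def using int_rho_poly[of s t p] int_rho_poly[of s t q]
  by (simp add: distrib_left set_integral_add(2))

lemma ip_smult: "ip s t (smult c p) = c * ip s t p"
  unfolding ip_def by (simp add: mult.left_commute)

lemma ip_uminus: "ip s t (- p) = - ip s t p"
  using ip_smult[of s t "-1" p] by simp

lemma ip_diff: "s > -1 \<Longrightarrow> t > -1 \<Longrightarrow> ip s t (p - q) = ip s t p - ip s t q"
  using ip_add[of s t p "-q"] by (simp add: ip_uminus)

lemma ip_0[simp]: "ip s t 0 = 0"
  unfolding ip_def by simp

lemma ip_sum: "s > -1 \<Longrightarrow> t > -1 \<Longrightarrow> ip s t (\<Sum>i\<in>A. f i) = (\<Sum>i\<in>A. ip s t (f i))"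
  by (induction A rule: infinite_finite_induct) (auto simp: ip_add)

lemma ip_cong: "(\<And>x. -1 < x \<Longrightarrow> x < 1 \<Longrightarrow> rho s t x * poly p x = rho s' t' x * poly q x) \<Longrightarrow> ip s t p = ip s' t' q"
  unfolding ip_def by (rule set_lebesgue_integral_cong) auto

definition Lp :: "real \<Rightarrow> real \<Rightarrow> real poly \<Rightarrow> real poly" where
  "Lp s t p = [:1, 0, -1:] * pderiv p + [:t - s, - (t + s):] * p"

lemma poly_Lp: "poly (Lp s t p) x = (1 - x\<^sup>2) * poly (pderiv p) x + (t * (1 - x) - s * (1 + x)) * poly p x"
  unfolding Lp_def by (simp add: algebra_simps power2_eq_square)

lemma DERIV_rho_poly:
  assumes "-1 < x" "x < 1"
  shows "((\<lambda>x. rho s t x * poly p x) has_real_derivative rho (s - 1) (t - 1) x * poly (Lp s t p) x) (at x)"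
  using DERIV_rho_g[OF assms poly_DERIV[of p x], of s t] by (simp add: poly_Lp)

lemma ibp_zero:
  assumes "s > 0" "t > 0"
  shows "ip (s - 1) (t - 1) (Lp s t p) = 0"
proof -
  have "(LBINT x=ereal (-1)..ereal 1. rho (s - 1) (t - 1) x * poly (Lp s t p) x) = 0 - 0"
  proof (rule ftc_Ioo[where F = "\<lambda>x. rho s t x * poly p x"])
    show "set_integrable lborel {-1<..<1} (\<lambda>x. rho (s - 1) (t - 1) x * poly (Lp s t p) x)"
      using assms by (intro int_rho_poly) auto
    show "((\<lambda>x. rho s t x * poly p x) \<longlongrightarrow> 0) (at_right (-1))"
      using assms by (intro rho_tendsto_right[where L = "poly p (-1)"]) (auto intro!: tendsto_eq_intros)
    show "((\<lambda>x. rho s t x * poly p x) \<longlongrightarrow> 0) (at_left 1)"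
      using assms by (intro rho_tendsto_left[where L = "poly p 1"]) (auto intro!: tendsto_eq_intros)
    show "isCont (\<lambda>x. rho (s - 1) (t - 1) x * poly (Lp s t p) x) x" if "-1 < x" "x < 1" for x
      using that unfolding rho_def by (auto intro!: continuous_intros)
  qed (auto intro!: DERIV_rho_poly)
  then show ?thesis by (simp add: ip_LBINT)
qed

lemma J_pos:
  assumes "s > -1" "t > -1"
  shows "0 < ip s t 1"
proof -
  define f where "f = (\<lambda>x. indicator {-1<..<1::real} x * rho s t x)"
  have si: "set_integrable lborel {-1<..<1::real} (\<lambda>x. rho s t x * poly 1 x)"
    using assms by (rule int_rho_poly)
  then have int: "integrable lborel f"
    unfolding f_def set_integrable_def by simp
  have nn: "0 \<le> ip s t 1"
    unfolding ip_def set_lebesgue_integral_def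
    by (rule Bochner_Integration.integral_nonneg) (simp add: rho_def indicator_def)
  have "ip s t 1 \<noteq> 0"
  proof
    assume z: "ip s t 1 = 0"
    have "{-1<..<1::real} \<in> null_sets lborel"
    proof (rule null_if_pos_func_has_zero_int[OF int])
      show "{-1<..<1::real} \<in> sets lborel" by simp
      show "AE x\<in>{-1<..<1} in lborel. 0 < f x"
        by (intro AE_I2) (auto simp: f_def rho_def)
      have "(LINT x:{-1<..<1}|lborel. f x) = ip s t 1"
        unfolding ip_def f_def by (rule set_lebesgue_integral_cong) auto
      then show "(LINT x:{-1<..<1}|lborel. f x) = 0" using z by simp
    qed
    then show False by (auto simp: null_sets_def)
  qed
  with nn show ?thesis by simp
qed

lemma J_rec:
  assumes "s > -1" "t > -1"
  shows "ip (s + 1) t 1 = 2 * (s + 1) / (s + t + 2) * ip s t 1"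
    and "ip s (t + 1) 1 = 2 * (t + 1) / (s + t + 2) * ip s t 1"
proof -
  have z: "ip s t (Lp (s + 1) (t + 1) 1) = 0"
    using ibp_zero[of "s + 1" "t + 1" 1] assms by simp
  have L1: "Lp (s + 1) (t + 1) 1 = smult (t - s) 1 + smult (- (s + t + 2)) [:0, 1:]"
    unfolding Lp_def by (simp add: algebra_simps)
  have e: "(t - s) * ip s t 1 = (s + t + 2) * ip s t [:0, 1:]"
    using z unfolding L1 ip_add[OF assms] ip_smult by (simp add: algebra_simps)
  have m: "ip (s + 1) t 1 = ip s t 1 - ip s t [:0, 1:]"
  proof -
    have "ip (s + 1) t 1 = ip s t (1 - [:0, 1:])"
    proof (rule ip_cong)
      fix x :: real assume "-1 < x" "x < 1"
      then show "rho (s + 1) t x * poly 1 x = rho s t x * poly (1 - [:0, 1:]) x"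
        using rho_1mx[of x s t] by (simp add: algebra_simps)
    qed
    then show ?thesis using assms by (simp add: ip_diff)
  qed
  have p: "ip s (t + 1) 1 = ip s t 1 + ip s t [:0, 1:]"
  proof -
    have "ip s (t + 1) 1 = ip s t (1 + [:0, 1:])"
    proof (rule ip_cong)
      fix x :: real assume "-1 < x" "x < 1"
      then show "rho s (t + 1) x * poly 1 x = rho s t x * poly (1 + [:0, 1:]) x"
        using rho_1px[of x s t] by (simp add: algebra_simps)
    qed
    then show ?thesis using assms by (simp add: ip_add)
  qed
  have pos: "s + t + 2 > 0" using assms by simp
  have M1: "ip s t [:0, 1:] = (t - s) * ip s t 1 / (s + t + 2)"
    using e pos by (simp add: field_simps)
  have "ip (s + 1) t 1 = ip s t 1 * ((s + t + 2) - (t - s)) / (s + t + 2)"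
    unfolding m M1 using pos by (simp add: field_simps)
  then show "ip (s + 1) t 1 = 2 * (s + 1) / (s + t + 2) * ip s t 1"
    by (simp add: algebra_simps)
  have "ip s (t + 1) 1 = ip s t 1 * ((s + t + 2) + (t - s)) / (s + t + 2)"
    unfolding p M1 using pos by (simp add: field_simps)
  then show "ip s (t + 1) 1 = 2 * (t + 1) / (s + t + 2) * ip s t 1"
    by (simp add: algebra_simps)
qed

lemma J_rec2:
  assumes "s > -1" "t > -1"
  shows "ip (s + 1) (t + 1) 1 = 4 * (s + 1) * (t + 1) / ((s + t + 2) * (s + t + 3)) * ip s t 1"
proof -
  have "ip (s + 1) (t + 1) 1 = 2 * (t + 1) / ((s + 1) + t + 2) * ip (s + 1) t 1"
    using assms by (intro J_rec(2)) auto
  also have "\<dots> = 2 * (t + 1) / ((s + 1) + t + 2) * (2 * (s + 1) / (s + t + 2) * ip s t 1)"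
    using assms by (simp add: J_rec(1))
  also have "\<dots> = 4 * (s + 1) * (t + 1) / ((s + t + 2) * (s + t + 3)) * ip s t 1"
    by (simp add: field_simps)
  finally show ?thesis .
qed


definition U :: "real poly" where "U = [:-1/2, 1/2:]"
definition V :: "real poly" where "V = [:1/2, 1/2:]"

definition JP :: "nat \<Rightarrow> real \<Rightarrow> real \<Rightarrow> real poly" where
  "JP n al be = (\<Sum>s\<le>n. smult (((real n + al) gchoose (n - s)) * ((real n + be) gchoose s)) (U ^ s * V ^ (n - s)))"

lemma poly_JP: "poly (JP n al be) x = jacobiP n al be x"
  unfolding JP_def jacobiP_def U_def V_def
  by (simp add: poly_sum field_simps)

lemma pderiv_U: "pderiv U = [:1/2:]" unfolding U_def by (simp add: pderiv_pCons)
lemma pderiv_V: "pderiv V = [:1/2:]" unfolding V_def by (simp add: pderiv_pCons)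

lemma Lp_add: "Lp s t (p + q) = Lp s t p + Lp s t q"
  unfolding Lp_def pderiv_add distrib_left by (simp only: add_ac)

lemma Lp_smult: "Lp s t (smult c p) = smult c (Lp s t p)"
  unfolding Lp_def by (simp only: pderiv_smult mult_smult_right smult_add_right)

lemma Lp_0[simp]: "Lp s t 0 = 0"
  unfolding Lp_def by simp

lemma Lp_diff: "Lp s t (p - q) = Lp s t p - Lp s t q"
proof -
  have "p - q = p + smult (-1) q" by simp
  then show ?thesis by (simp only: Lp_add Lp_smult) simp
qed

lemma Lp_sum: "Lp s t (\<Sum>i\<in>A. f i) = (\<Sum>i\<in>A. Lp s t (f i))"
  by (induction A rule: infinite_finite_induct) (auto simp: Lp_add)

lemma Lp_mult: "Lp s t (f * g) = Lp s t f * g + [:1, 0, -1:] * f * pderiv g"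
  unfolding Lp_def by (simp only: pderiv_mult distrib_left distrib_right mult_ac add_ac)

lemma Lp_UV:
  "Lp s t (U ^ k * V ^ j) = smult (-2 * (real k + s)) (U ^ k * V ^ (Suc j)) + smult (-2 * (real j + t)) (U ^ (Suc k) * V ^ j)"
proof -
  have dU: "pderiv (U ^ k) = smult (real k / 2) (U ^ (k - 1))"
    by (simp add: pderiv_power pderiv_U)
  have dV: "pderiv (V ^ j) = smult (real j / 2) (V ^ (j - 1))"
    by (simp add: pderiv_power pderiv_V)
  have kU: "smult (real k) (U * U ^ (k - 1)) = smult (real k) (U ^ k)"
    by (cases k) auto
  have jV: "smult (real j) (V * V ^ (j - 1)) = smult (real j) (V ^ j)"
    by (cases j) auto
  have UV: "[:1, 0, -1:] = smult (-4) (U * V)" unfolding U_def V_def by simp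
  have lin: "[:t - s, - (t + s):] = smult (-2 * t) U + smult (-2 * s) V" unfolding U_def V_def by simp
  have "Lp s t (U ^ k * V ^ j) = smult (-4) (U * V) * (U ^ k * smult (real j / 2) (V ^ (j - 1)) + V ^ j * smult (real k / 2) (U ^ (k - 1)))
      + (smult (-2 * t) U + smult (-2 * s) V) * (U ^ k * V ^ j)"
    unfolding Lp_def pderiv_mult dU dV UV lin ..
  also have "\<dots> = smult (-2) (U ^ k * (smult (real j) (V * V ^ (j - 1)))) * U + smult (-2) (V ^ j * smult (real k) (U * U ^ (k - 1))) * V
      + (smult (-2 * t) U + smult (-2 * s) V) * (U ^ k * V ^ j)"
    by (simp add: algebra_simps)
  also have "\<dots> = smult (-2) (U ^ k * (smult (real j) (V ^ j))) * U + smult (-2) (V ^ j * smult (real k) (U ^ k)) * V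
      + (smult (-2 * t) U + smult (-2 * s) V) * (U ^ k * V ^ j)"
    unfolding kU jV by (simp add: algebra_simps)
  also have "\<dots> = smult (-2 * (real k + s)) (U ^ k * V ^ (Suc j)) + smult (-2 * (real j + t)) (U ^ (Suc k) * V ^ j)"
    by (simp add: algebra_simps smult_add_left smult_diff_left smult_minus_left)
  finally show ?thesis .
qed

lemma smult_sum_right: "smult c (\<Sum>i\<in>A. f i) = (\<Sum>i\<in>A. smult c (f i))"
  by (induction A rule: infinite_finite_induct) (auto simp: smult_add_right)

lemma gb_step: "((a::real) - of_nat K) * (a gchoose K) = of_nat (Suc K) * (a gchoose Suc K)"
  using gbinomial_mult_1[of a K] by (simp add: algebra_simps)

lemma raising:
  "Lp (al + 1) (be + 1) (JP m (al + 1) (be + 1)) = smult (-2 * real (Suc m)) (JP (Suc m) al be)"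
proof -
  define n where "n = Suc m"
  define q where "q k = ((real m + (al + 1)) gchoose (m - k)) * ((real m + (be + 1)) gchoose k)" for k
  define p where "p k = ((real n + al) gchoose (n - k)) * ((real n + be) gchoose k)" for k
  define T where "T k = U ^ k * V ^ (n - k)" for k
  define A where "A k = (if k = n then 0 else -2 * (real k + (al + 1)) * q k)" for k
  define B where "B k = (if k = 0 then 0 else -2 * (real (m - (k - 1)) + (be + 1)) * q (k - 1))" for k
  have "Lp (al + 1) (be + 1) (JP m (al + 1) (be + 1)) =
      (\<Sum>k\<le>m. smult (q k) (Lp (al + 1) (be + 1) (U ^ k * V ^ (m - k))))"
    unfolding JP_def Lp_sum Lp_smult q_def ..
  also have "\<dots> = (\<Sum>k\<le>m. smult (-2 * (real k + (al + 1)) * q k) (T k)) +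
                  (\<Sum>k\<le>m. smult (-2 * (real (m - k) + (be + 1)) * q k) (T (Suc k)))"
  proof -
    have "smult (q k) (Lp (al + 1) (be + 1) (U ^ k * V ^ (m - k))) =
          smult (-2 * (real k + (al + 1)) * q k) (T k) + smult (-2 * (real (m - k) + (be + 1)) * q k) (T (Suc k))"
      if "k \<le> m" for k
    proof -
      have "Suc (m - k) = n - k" "m - k = n - Suc k" using that by (auto simp: n_def)
      then show ?thesis unfolding Lp_UV T_def by (simp add: smult_add_right mult_ac)
    qed
    then show ?thesis by (simp add: sum.distrib)
  qed
  also have "(\<Sum>k\<le>m. smult (-2 * (real k + (al + 1)) * q k) (T k)) = (\<Sum>k\<le>n. smult (A k) (T k))"
    unfolding n_def sum.atMost_Suc A_def by (simp add: n_def)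
  also have "(\<Sum>k\<le>m. smult (-2 * (real (m - k) + (be + 1)) * q k) (T (Suc k))) = (\<Sum>k\<le>n. smult (B k) (T k))"
    unfolding n_def sum.atMost_Suc_shift B_def by simp
  also have "(\<Sum>k\<le>n. smult (A k) (T k)) + (\<Sum>k\<le>n. smult (B k) (T k)) = (\<Sum>k\<le>n. smult (-2 * real n * p k) (T k))"
    unfolding sum.distrib[symmetric] smult_add_left[symmetric]
  proof (rule sum.cong[OF refl])
    fix k assume k: "k \<in> {..n}"
    have e1: "real m + (al + 1) = real n + al" and e2: "real m + (be + 1) = real n + be"
      by (simp_all add: n_def)
    have c1: "(if k = n then 0 else (real k + (al + 1)) * q k) = real (n - k) * p k"
    proof (cases "k = n")
      case False
      then have km: "k \<le> m" using k by (auto simp: n_def)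
      have hk1: "real n + al - of_nat (m - k) = real k + (al + 1)" using km by (simp add: n_def of_nat_diff)
      have hk2: "Suc (m - k) = n - k" using km by (simp add: n_def)
      have g: "(real k + (al + 1)) * ((real n + al) gchoose (m - k)) = of_nat (n - k) * ((real n + al) gchoose (n - k))"
        using gb_step[of "real n + al" "m - k"] unfolding hk1 hk2 .
      have "(real k + (al + 1)) * q k = (of_nat (n - k) * ((real n + al) gchoose (n - k))) * ((real n + be) gchoose k)"
        unfolding q_def e1 e2 g[symmetric] by (simp only: mult.assoc)
      then show ?thesis using False unfolding p_def by (simp only: mult.assoc if_False)
    qed simp
    have c2: "(if k = 0 then 0 else (real (m - (k - 1)) + (be + 1)) * q (k - 1)) = real k * p k"
    proof (cases "k = 0")
      case False
      then have k1: "1 \<le> k" "k \<le> n" using k by auto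
      have hk1: "real n + be - of_nat (k - 1) = real (m - (k - 1)) + (be + 1)" using k1 by (simp add: n_def of_nat_diff)
      have hk2: "Suc (k - 1) = k" using k1 by simp
      have hk3: "m - (k - 1) = n - k" using k1 by (simp add: n_def)
      have g: "(real (m - (k - 1)) + (be + 1)) * ((real n + be) gchoose (k - 1)) = of_nat k * ((real n + be) gchoose k)"
        using gb_step[of "real n + be" "k - 1"] unfolding hk1 hk2 .
      have "(real (m - (k - 1)) + (be + 1)) * q (k - 1) = ((real n + al) gchoose (n - k)) * (of_nat k * ((real n + be) gchoose k))"
        unfolding q_def e1 e2 g[symmetric] hk3 by (simp only: mult_ac)
      then show ?thesis using False unfolding p_def by (simp only: mult_ac if_False)
    qed simp
    have Ak: "A k = -2 * (if k = n then 0 else (real k + (al + 1)) * q k)" unfolding A_def by (simp add: algebra_simps)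
    have Bk: "B k = -2 * (if k = 0 then 0 else (real (m - (k - 1)) + (be + 1)) * q (k - 1))" unfolding B_def by (simp add: algebra_simps)
    have "A k + B k = -2 * (real (n - k) * p k + real k * p k)"
      unfolding Ak Bk c1 c2 by (simp add: algebra_simps)
    also have "\<dots> = -2 * real n * p k" using k by (simp add: of_nat_diff algebra_simps)
    finally show "smult (A k + B k) (T k) = smult (-2 * real n * p k) (T k)" by simp
  qed
  also have "\<dots> = smult (-2 * real (Suc m)) (JP (Suc m) al be)"
    unfolding JP_def smult_sum_right smult_smult T_def p_def n_def ..
  finally show ?thesis .
qed

lemma U_ne: "U \<noteq> 0" and V_ne: "V \<noteq> 0" unfolding U_def V_def by auto

lemma degree_UV: "degree (U ^ k * V ^ j) = k + j"
  using U_ne V_ne by (simp add: degree_mult_eq degree_power_eq) (simp add: U_def V_def)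

lemma coeff_UV: "coeff (U ^ k * V ^ j) (k + j) = (1/2) ^ (k + j)"
proof -
  have "coeff (U ^ k * V ^ j) (k + j) = lead_coeff (U ^ k * V ^ j)" by (simp add: degree_UV)
  also have "\<dots> = (1/2) ^ (k + j)"
    by (simp add: lead_coeff_mult lead_coeff_power power_add) (simp add: U_def V_def)
  finally show ?thesis .
qed

lemma degree_JP: "degree (JP n al be) \<le> n"
  unfolding JP_def
  by (rule degree_sum_le) (auto intro!: order.trans[OF degree_smult_le] simp: degree_UV)

lemma coeff_JP: "coeff (JP n al be) n = (1/2) ^ n * ((2 * real n + al + be) gchoose n)"
proof -
  have "coeff (JP n al be) n = (\<Sum>s\<le>n. ((real n + al) gchoose (n - s)) * ((real n + be) gchoose s) * (1/2) ^ n)"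
    unfolding JP_def coeff_sum
  proof (rule sum.cong[OF refl])
    fix s assume "s \<in> {..n}"
    then have "n = s + (n - s)" by simp
    then have "coeff (U ^ s * V ^ (n - s)) n = (1/2) ^ n"
      using coeff_UV[of s "n - s"] by simp
    then show "coeff (smult (((real n + al) gchoose (n - s)) * ((real n + be) gchoose s)) (U ^ s * V ^ (n - s))) n =
      ((real n + al) gchoose (n - s)) * ((real n + be) gchoose s) * (1/2) ^ n" by simp
  qed
  also have "\<dots> = (1/2) ^ n * (\<Sum>s\<le>n. ((real n + be) gchoose s) * ((real n + al) gchoose (n - s)))"
    by (simp add: sum_distrib_left mult_ac)
  also have "(\<Sum>s\<le>n. ((real n + be) gchoose s) * ((real n + al) gchoose (n - s))) = (2 * real n + al + be) gchoose n"
    using gbinomial_Vandermonde[of "real n + be" "real n + al" n] by (simp add: atLeast0AtMost algebra_simps)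
  finally show ?thesis .
qed

lemma coeff_Lp_Suc:
  "coeff (Lp s t p) (Suc k) = real (Suc (Suc k)) * coeff p (Suc (Suc k)) - real k * coeff p k
      + (t - s) * coeff p (Suc k) - (t + s) * coeff p k"
  unfolding Lp_def by (cases k) (simp_all add: coeff_pderiv algebra_simps)

lemma coeff_Lp_0:
  "coeff (Lp s t p) 0 = coeff p 1 + (t - s) * coeff p 0"
  unfolding Lp_def by (simp add: coeff_pderiv algebra_simps)

lemma degree_Lp: "degree p \<le> d \<Longrightarrow> degree (Lp s t p) \<le> Suc d"
proof (rule degree_le, intro allI impI)
  fix i assume d: "degree p \<le> d" and i: "Suc d < i"
  then obtain k where k: "i = Suc k" "d < k" by (cases i) auto
  have "coeff p (Suc (Suc k)) = 0" "coeff p k = 0" "coeff p (Suc k) = 0"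
    using d k by (auto intro!: coeff_eq_0)
  then show "coeff (Lp s t p) i = 0" unfolding k coeff_Lp_Suc by simp
qed

lemma coeff_Lp_top: "degree p \<le> d \<Longrightarrow> coeff (Lp s t p) (Suc d) = - (real d + s + t) * coeff p d"
proof -
  assume d: "degree p \<le> d"
  have "coeff p (Suc (Suc d)) = 0" "coeff p (Suc d) = 0" using d by (auto intro!: coeff_eq_0)
  then show ?thesis unfolding coeff_Lp_Suc by (simp add: algebra_simps)
qed

lemma ip_1mx2:
  "ip s t ([:1, 0, -1:] * h) = ip (s + 1) (t + 1) h"
proof (rule ip_cong)
  fix x :: real assume x: "-1 < x" "x < 1"
  have "poly ([:1, 0, -1:] * h) x = (1 - x\<^sup>2) * poly h x" by (simp add: power2_eq_square algebra_simps)
  then show "rho s t x * poly ([:1, 0, -1:] * h) x = rho (s + 1) (t + 1) x * poly h x"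
    by (simp only: mult.assoc[symmetric] rho_1mx2[OF x])
qed

lemma moment_step:
  assumes "al > -1" "be > -1"
  shows "2 * real (Suc m) * ip al be (JP (Suc m) al be * monom 1 j)
       = real j * ip (al + 1) (be + 1) (JP m (al + 1) (be + 1) * monom 1 (j - 1))"
proof -
  let ?Q = "JP m (al + 1) (be + 1)"
  have z: "ip al be (Lp (al + 1) (be + 1) (?Q * monom 1 j)) = 0"
    using ibp_zero[of "al + 1" "be + 1" "?Q * monom 1 j"] assms by simp
  have pd: "pderiv (monom (1::real) j) = smult (real j) (monom 1 (j - 1))"
    by (simp add: pderiv_monom smult_monom)
  have eq: "Lp (al + 1) (be + 1) (?Q * monom 1 j) =
      smult (-2 * real (Suc m)) (JP (Suc m) al be * monom 1 j) + smult (real j) ([:1, 0, -1:] * (?Q * monom 1 (j - 1)))"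
    unfolding Lp_mult raising pd by (simp only: mult_smult_left mult_smult_right mult_ac)
  have "ip al be (Lp (al + 1) (be + 1) (?Q * monom 1 j)) = -2 * real (Suc m) * ip al be (JP (Suc m) al be * monom 1 j) + real j * ip (al + 1) (be + 1) (?Q * monom 1 (j - 1))"
    unfolding eq ip_add[OF assms] ip_smult ip_1mx2 ..
  then have "0 = -2 * real (Suc m) * ip al be (JP (Suc m) al be * monom 1 j) + real j * ip (al + 1) (be + 1) (?Q * monom 1 (j - 1))"
    using z by simp
  then show ?thesis by (simp add: algebra_simps)
qed

lemma moments:
  "\<forall>al be. al > -1 \<longrightarrow> be > -1 \<longrightarrow>
     (\<forall>j<n. ip al be (JP n al be * monom 1 j) = 0) \<and>
     ip al be (JP n al be * monom 1 n) = ip (al + real n) (be + real n) 1 / 2 ^ n"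
proof (induction n)
  case 0
  have "JP 0 al be = 1" for al be unfolding JP_def by simp
  then show ?case by simp
next
  case (Suc m)
  show ?case
  proof (intro allI impI conjI)
    fix al be :: real assume ab: "al > -1" "be > -1"
    then have ab1: "al + 1 > -1" "be + 1 > -1" by auto
    note IH = Suc.IH[rule_format, OF ab1]
    have ms: "ip al be (JP (Suc m) al be * monom 1 j) = real j * ip (al + 1) (be + 1) (JP m (al + 1) (be + 1) * monom 1 (j - 1)) / (2 * real (Suc m))" for j
      using moment_step[OF ab, of m j] by (simp add: field_simps)
    show "ip al be (JP (Suc m) al be * monom 1 j) = 0" if "j < Suc m" for j
      unfolding ms using IH that by (cases j) auto
    show "ip al be (JP (Suc m) al be * monom 1 (Suc m)) = ip (al + real (Suc m)) (be + real (Suc m)) 1 / 2 ^ Suc m"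
      unfolding ms using IH by (simp add: field_simps)
  qed
qed


definition mom :: "real \<Rightarrow> real \<Rightarrow> nat \<Rightarrow> real" where
  "mom al be n = ip al be (JP n al be * monom 1 n)"
definition lcf :: "real \<Rightarrow> real \<Rightarrow> nat \<Rightarrow> real" where
  "lcf al be n = coeff (JP n al be) n"
definition hh :: "real \<Rightarrow> real \<Rightarrow> nat \<Rightarrow> real" where
  "hh al be n = ip al be (JP n al be * JP n al be)"

context
  fixes al be :: real
  assumes al: "al > -1" and be: "be > -1"
begin

lemma mom_eq: "mom al be n = ip (al + real n) (be + real n) 1 / 2 ^ n"
  unfolding mom_def using moments[of n] al be by blast

lemma mom_low: "j < n \<Longrightarrow> ip al be (JP n al be * monom 1 j) = 0"
  using moments[of n] al be by blast

lemma mom_pos: "mom al be n > 0"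
  unfolding mom_eq using J_pos[of "al + real n" "be + real n"] al be by simp

lemma ip_JP_low:
  assumes "degree q \<le> n"
  shows "ip al be (JP n al be * q) = coeff q n * mom al be n"
proof -
  have "JP n al be * q = JP n al be * (\<Sum>i\<le>degree q. monom (coeff q i) i)"
    by (simp add: poly_as_sum_of_monoms)
  also have "\<dots> = (\<Sum>i\<le>degree q. smult (coeff q i) (JP n al be * monom 1 i))"
  proof -
    have "monom (coeff q i) i = smult (coeff q i) (monom 1 i)" for i by (simp add: smult_monom)
    then show ?thesis by (simp add: sum_distrib_left mult_smult_right)
  qed
  finally have "ip al be (JP n al be * q) = (\<Sum>i\<le>degree q. coeff q i * ip al be (JP n al be * monom 1 i))"
    using al be by (simp add: ip_sum ip_smult)
  also have "\<dots> = (\<Sum>i\<le>degree q. if i = n then coeff q n * mom al be n else 0)"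
  proof (rule sum.cong[OF refl])
    fix i assume "i \<in> {..degree q}"
    then have "i \<le> n" using assms by simp
    then show "coeff q i * ip al be (JP n al be * monom 1 i) = (if i = n then coeff q n * mom al be n else 0)"
      by (auto simp: mom_def mom_low)
  qed
  also have "\<dots> = coeff q n * mom al be n"
    using assms by (auto simp: coeff_eq_0)
  finally show ?thesis .
qed

lemma lcf_eq: "lcf al be n = (1/2) ^ n * ((2 * real n + al + be) gchoose n)"
  unfolding lcf_def by (rule coeff_JP)

lemma lcf_pos: "lcf al be n > 0"
proof (cases n)
  case 0
  then show ?thesis by (simp add: lcf_eq)
next
  case (Suc m)
  have "(2 * real n + al + be) gchoose n = pochhammer (2 * real n + al + be - of_nat n + 1) n / fact n"
    by (rule gbinomial_pochhammer')
  moreover have "pochhammer (2 * real n + al + be - of_nat n + 1) n > 0"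
    using al be Suc by (intro pochhammer_pos) simp
  ultimately show ?thesis by (simp add: lcf_eq)
qed

lemma hh_eq: "hh al be n = lcf al be n * mom al be n"
  unfolding hh_def lcf_def by (rule ip_JP_low[OF degree_JP])

lemma hh_pos: "hh al be n > 0"
  unfolding hh_eq using lcf_pos mom_pos by simp

lemma ip_comm: "ip s t (p * q) = ip s t (q * p)"
  by (simp add: mult.commute)

lemma JP_orth: "m \<noteq> n \<Longrightarrow> ip al be (JP m al be * JP n al be) = 0"
proof -
  have *: "ip al be (JP n al be * JP m al be) = 0" if "m < n" for m n
  proof -
    have "degree (JP m al be) \<le> n" using degree_JP[of m al be] that by simp
    then have "ip al be (JP n al be * JP m al be) = coeff (JP m al be) n * mom al be n"
      by (rule ip_JP_low)
    moreover have "coeff (JP m al be) n = 0" using degree_JP[of m al be] that by (intro coeff_eq_0) simp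
    ultimately show ?thesis by simp
  qed
  assume "m \<noteq> n"
  then show ?thesis using *[of m n] *[of n m] by (cases "m < n") (auto simp: ip_comm)
qed

lemma degree_drop:
  assumes "degree p \<le> Suc m" "coeff p (Suc m) = 0"
  shows "degree p \<le> m"
proof (rule degree_le, intro allI impI)
  fix i assume "m < i"
  then show "coeff p i = 0" using assms
    by (cases "i = Suc m") (auto intro!: coeff_eq_0)
qed

lemma expansion:
  "degree q \<le> m \<Longrightarrow> q = (\<Sum>k\<le>m. smult (ip al be (JP k al be * q) / hh al be k) (JP k al be))"
proof (induction m arbitrary: q)
  case 0
  then obtain c where q: "q = [:c:]" by (metis degree_eq_zeroE le_zero_eq)
  have J0: "JP 0 al be = 1" unfolding JP_def by simp
  have "ip al be (1 * [:c:]) = c * ip al be 1"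
    using ip_smult[of al be c 1] by simp
  moreover have "hh al be 0 = ip al be 1" unfolding hh_def J0 by simp
  moreover have "ip al be 1 \<noteq> 0" using J_pos[OF al be] by simp
  ultimately show ?case unfolding q by (simp add: J0)
next
  case (Suc m)
  define c where "c = coeff q (Suc m) / lcf al be (Suc m)"
  define q' where "q' = q - smult c (JP (Suc m) al be)"
  have lc: "lcf al be (Suc m) \<noteq> 0" using lcf_pos by (metis less_irrefl)
  have dq': "degree q' \<le> m"
  proof (rule degree_drop)
    show "degree q' \<le> Suc m" unfolding q'_def using Suc.prems degree_JP[of "Suc m" al be]
      by (intro degree_diff_le) (auto intro: order.trans[OF degree_smult_le])
    show "coeff q' (Suc m) = 0" unfolding q'_def c_def using lc by (simp add: lcf_def)
  qed
  note IH = Suc.IH[OF dq']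
  have ipk: "ip al be (JP k al be * q') = ip al be (JP k al be * q)" if "k \<le> m" for k
  proof -
    have "ip al be (JP k al be * q') = ip al be (JP k al be * q) - c * ip al be (JP k al be * JP (Suc m) al be)"
      unfolding q'_def right_diff_distrib mult_smult_right using al be by (simp add: ip_diff ip_smult)
    then show ?thesis using JP_orth[of k "Suc m"] that by simp
  qed
  have cc: "c = ip al be (JP (Suc m) al be * q) / hh al be (Suc m)"
    unfolding c_def hh_eq ip_JP_low[OF Suc.prems] using mom_pos[of "Suc m"] by simp
  have "q = q' + smult c (JP (Suc m) al be)" unfolding q'_def by simp
  also have "q' = (\<Sum>k\<le>m. smult (ip al be (JP k al be * q) / hh al be k) (JP k al be))"
    using IH ipk by (metis (no_types, lifting) atMost_iff sum.cong)
  finally show ?case unfolding cc by simp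
qed

end


definition pn :: "real \<Rightarrow> real \<Rightarrow> nat \<Rightarrow> real poly" where
  "pn a b k = smult (1 / sqrt (hh (a - 1) (b - 1) k)) (JP k (a - 1) (b - 1))"

definition cc :: "real \<Rightarrow> real \<Rightarrow> nat \<Rightarrow> real" where
  "cc a b n = ip (a - 1) (b - 1) (pn a b (Suc n) * Lp (a/2) (b/2) (pn a b n))"

lemma ip_lin_left:
  assumes "s > -1" "t > -1"
  shows "ip s t ((f + g) * h) = ip s t (f * h) + ip s t (g * h)"
    and "ip s t ((f - g) * h) = ip s t (f * h) - ip s t (g * h)"
    and "ip s t (smult c f * h) = c * ip s t (f * h)"
    and "ip s t (h * (f + g)) = ip s t (h * f) + ip s t (h * g)"
    and "ip s t (h * (f - g)) = ip s t (h * f) - ip s t (h * g)"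
    and "ip s t (h * smult c f) = c * ip s t (h * f)"
  using assms by (simp_all add: distrib_left distrib_right left_diff_distrib right_diff_distrib ip_add ip_diff ip_smult)

context
  fixes a b :: real
  assumes a: "a > 0" and b: "b > 0"
begin

lemma al: "a - 1 > -1" and be: "b - 1 > -1" using a b by auto

lemmas ipl = ip_lin_left[OF al be]

lemma hh_pos': "hh (a - 1) (b - 1) n > 0"
  using hh_pos[OF al be] .

lemma pn_orth: "ip (a - 1) (b - 1) (pn a b j * pn a b k) = (if j = k then 1 else 0)"
proof -
  have "ip (a - 1) (b - 1) (pn a b j * pn a b k) =
      (1 / sqrt (hh (a - 1) (b - 1) j)) * (1 / sqrt (hh (a - 1) (b - 1) k)) * ip (a - 1) (b - 1) (JP j (a - 1) (b - 1) * JP k (a - 1) (b - 1))"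
    unfolding pn_def ipl by simp
  then show ?thesis
    using JP_orth[OF al be, of j k] hh_pos'[of j] unfolding hh_def[symmetric]
    by (auto simp: real_sqrt_mult[symmetric] hh_def)
qed

lemma degree_pn: "degree (pn a b k) \<le> k"
  unfolding pn_def using degree_JP by (metis degree_smult_le order.trans)

lemma JP_pn: "JP k (a - 1) (b - 1) = smult (sqrt (hh (a - 1) (b - 1) k)) (pn a b k)"
  unfolding pn_def using hh_pos'[of k] by simp

lemma expansion_pn:
  "degree q \<le> m \<Longrightarrow> q = (\<Sum>k\<le>m. smult (ip (a - 1) (b - 1) (pn a b k * q)) (pn a b k))"
proof -
  assume "degree q \<le> m"
  then have "q = (\<Sum>k\<le>m. smult (ip (a - 1) (b - 1) (JP k (a - 1) (b - 1) * q) / hh (a - 1) (b - 1) k) (JP k (a - 1) (b - 1)))"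
    by (rule expansion[OF al be])
  also have "\<dots> = (\<Sum>k\<le>m. smult (ip (a - 1) (b - 1) (pn a b k * q)) (pn a b k))"
  proof (rule sum.cong[OF refl])
    fix k
    have h: "hh (a - 1) (b - 1) k > 0" by (rule hh_pos')
    show "smult (ip (a - 1) (b - 1) (JP k (a - 1) (b - 1) * q) / hh (a - 1) (b - 1) k) (JP k (a - 1) (b - 1)) =
        smult (ip (a - 1) (b - 1) (pn a b k * q)) (pn a b k)"
    proof -
      let ?s = "sqrt (hh (a - 1) (b - 1) k)" and ?X = "ip (a - 1) (b - 1) (pn a b k * q)"
      have ss: "?s * ?s = hh (a - 1) (b - 1) k" using h by simp
      have "?s * ?X / hh (a - 1) (b - 1) k * ?s = (?s * ?s) * ?X / hh (a - 1) (b - 1) k" by simp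
      also have "\<dots> = ?X" unfolding ss using h by simp
      finally have e: "?s * ?X / hh (a - 1) (b - 1) k * ?s = ?X" .
      show ?thesis unfolding JP_pn ipl smult_smult e ..
    qed
  qed
  finally show ?thesis .
qed

abbreviation Lw where "Lw \<equiv> Lp (a/2) (b/2)"

lemma Lp_prod: "Lp a b (f * g) = f * Lw g + Lw f * g"
proof -
  define A :: "real poly" where "A = [:1, 0, -1:]"
  define K1 :: "real poly" where "K1 = [:b/2 - a/2, - (b/2 + a/2):]"
  have K2: "[:b - a, - (b + a):] = K1 + K1" unfolding K1_def by simp
  show ?thesis unfolding Lp_def A_def[symmetric] K1_def[symmetric] K2 pderiv_mult
    by (simp only: distrib_left distrib_right mult_ac add_ac)
qed

lemma skew: "ip (a - 1) (b - 1) (f * Lw g) = - ip (a - 1) (b - 1) (Lw f * g)"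
proof -
  have "ip (a - 1) (b - 1) (Lp a b (f * g)) = 0" using a b by (rule ibp_zero)
  then show ?thesis unfolding Lp_prod using al be by (simp add: ip_add)
qed

lemma three_term:
  "Lw (pn a b n) = smult (cc a b n) (pn a b (Suc n)) - (if n = 0 then 0 else smult (cc a b (n - 1)) (pn a b (n - 1)))"
proof -
  have d: "degree (Lw (pn a b n)) \<le> Suc n" by (rule degree_Lp[OF degree_pn])
  have coef: "ip (a - 1) (b - 1) (pn a b k * Lw (pn a b n)) =
      (if k = Suc n then cc a b n else if Suc k = n then - cc a b k else 0)" if "k \<le> Suc n" for k
  proof -
    have "k = Suc n \<or> k = n \<or> Suc k = n \<or> Suc k < n" using that by linarith
    then consider "k = Suc n" | "k = n" | "Suc k = n" | "Suc k < n" by blast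
    then show ?thesis
    proof cases
      case 1 then show ?thesis by (simp add: cc_def)
    next
      case 2
      have "ip (a - 1) (b - 1) (pn a b n * Lw (pn a b n)) = - ip (a - 1) (b - 1) (pn a b n * Lw (pn a b n))"
        using skew[of "pn a b n" "pn a b n"] by (simp add: mult.commute)
      then show ?thesis using 2 by simp
    next
      case 3
      have "ip (a - 1) (b - 1) (pn a b k * Lw (pn a b n)) = - ip (a - 1) (b - 1) (pn a b n * Lw (pn a b k))"
        using skew[of "pn a b k" "pn a b n"] by (simp add: mult.commute)
      then show ?thesis using 3 by (auto simp: cc_def)
    next
      case 4
      have dk1: "degree (Lw (pn a b k)) \<le> Suc k" by (rule degree_Lp[OF degree_pn])
      then have dk: "degree (Lw (pn a b k)) \<le> n" using 4 by simp
      have "ip (a - 1) (b - 1) (pn a b k * Lw (pn a b n)) = - ip (a - 1) (b - 1) (pn a b n * Lw (pn a b k))"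
        using skew[of "pn a b k" "pn a b n"] by (simp add: mult.commute)
      also have "ip (a - 1) (b - 1) (pn a b n * Lw (pn a b k)) =
          (1 / sqrt (hh (a - 1) (b - 1) n)) * ip (a - 1) (b - 1) (JP n (a - 1) (b - 1) * Lw (pn a b k))"
        unfolding pn_def ipl ..
      also have "ip (a - 1) (b - 1) (JP n (a - 1) (b - 1) * Lw (pn a b k)) = 0"
        unfolding ip_JP_low[OF al be dk] using dk1 4 by (simp add: coeff_eq_0)
      finally show ?thesis using 4 by simp
    qed
  qed
  have "Lw (pn a b n) = (\<Sum>k\<le>Suc n. smult (ip (a - 1) (b - 1) (pn a b k * Lw (pn a b n))) (pn a b k))"
    by (rule expansion_pn[OF d])
  also have "\<dots> = (\<Sum>k\<le>Suc n. smult (if k = Suc n then cc a b n else if Suc k = n then - cc a b k else 0) (pn a b k))"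
    by (rule sum.cong[OF refl]) (simp add: coef)
  also have "\<dots> = smult (cc a b n) (pn a b (Suc n)) - (if n = 0 then 0 else smult (cc a b (n - 1)) (pn a b (n - 1)))"
  proof (cases n)
    case 0
    then show ?thesis by (simp add: sum.atMost_Suc)
  next
    case (Suc m)
    have "(\<Sum>k\<le>Suc n. smult (if k = Suc n then cc a b n else if Suc k = n then - cc a b k else 0) (pn a b k))
        = (\<Sum>k\<le>n. smult (if Suc k = n then - cc a b k else 0) (pn a b k)) + smult (cc a b n) (pn a b (Suc n))"
      by (simp add: sum.atMost_Suc)
    also have "(\<Sum>k\<le>n. smult (if Suc k = n then - cc a b k else 0) (pn a b k)) = (\<Sum>k\<le>n. if k = m then smult (- cc a b m) (pn a b m) else 0)"
      by (rule sum.cong) (auto simp: Suc)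
    also have "\<dots> = smult (- cc a b m) (pn a b m)" using Suc by simp
    finally show ?thesis using Suc by simp
  qed
  finally show ?thesis .
qed

end


lemma aux_frac: "(C::real) \<noteq> 0 \<Longrightarrow> D \<noteq> 0 \<Longrightarrow> 4 * A * B / (C * D) * J0 / 2 ^ Suc n = J0 / 2 ^ n * (2 * A * B / (C * D))"
  by (simp add: field_simps)

lemma mom_Suc:
  assumes "al > -1" "be > -1"
  shows "mom al be (Suc n) = mom al be n * (2 * (al + real n + 1) * (be + real n + 1) / ((al + be + 2 * real n + 2) * (al + be + 2 * real n + 3)))"
proof -
  have e: "al + real (Suc n) = (al + n) + 1" "be + real (Suc n) = (be + n) + 1" by simp_all
  have d1: "(al + n) + (be + n) + 2 = al + be + 2 * real n + 2" "(al + n) + (be + n) + 3 = al + be + 2 * real n + 3" by simp_all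
  have J1: "ip (al + real (Suc n)) (be + real (Suc n)) 1 = 4 * (al + real n + 1) * (be + real n + 1) / ((al + be + 2 * real n + 2) * (al + be + 2 * real n + 3)) * ip (al + n) (be + n) 1"
    unfolding e d1[symmetric] using assms by (intro J_rec2) auto
  have pos: "al + be + 2 * real n + 2 \<noteq> 0" "al + be + 2 * real n + 3 \<noteq> 0" using assms by auto
  show ?thesis unfolding mom_eq[OF assms] J1 by (rule aux_frac[OF pos])
qed

lemma lcf_Suc:
  assumes "al > -1" "be > -1" "n \<ge> 1"
  shows "lcf al be (Suc n) = lcf al be n * ((2 * real n + al + be + 1) * (2 * real n + al + be + 2) / (2 * (real n + 1) * (real n + al + be + 1)))"
proof -
  define z where "z = real n + al + be + 1"
  have z: "z > 0" using assms by (simp add: z_def)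
  have l0: "lcf al be n = (1/2) ^ n * (pochhammer z n / fact n)"
    unfolding lcf_eq[OF assms(1,2)] gbinomial_pochhammer' z_def by (simp add: algebra_simps)
  have l1: "lcf al be (Suc n) = (1/2) ^ Suc n * (pochhammer (z + 1) (Suc n) / fact (Suc n))"
    unfolding lcf_eq[OF assms(1,2)] gbinomial_pochhammer' z_def by (simp add: algebra_simps)
  have "z * pochhammer (z + 1) (Suc n) = pochhammer z (Suc (Suc n))" by (simp add: pochhammer_rec)
  also have "\<dots> = pochhammer z n * (z + n) * (z + n + 1)" by (simp add: pochhammer_Suc algebra_simps)
  finally have p: "pochhammer (z + 1) (Suc n) = pochhammer z n * (z + n) * (z + n + 1) / z" using z by (simp add: field_simps)
  show ?thesis unfolding l0 l1 p using z by (simp add: z_def field_simps)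
qed

context
  fixes a b :: real
  assumes a: "a > 0" and b: "b > 0"
begin

lemma al': "a - 1 > -1" and be': "b - 1 > -1" using a b by auto

lemma cc_eq: "cc a b n = - (real n + a/2 + b/2) * lcf (a - 1) (b - 1) n * mom (a - 1) (b - 1) (Suc n)
    / (sqrt (hh (a - 1) (b - 1) (Suc n)) * sqrt (hh (a - 1) (b - 1) n))"
proof -
  have d: "degree (Lp (a/2) (b/2) (JP n (a - 1) (b - 1))) \<le> Suc n" by (rule degree_Lp[OF degree_JP])
  have "cc a b n = (1 / sqrt (hh (a - 1) (b - 1) (Suc n))) * (1 / sqrt (hh (a - 1) (b - 1) n)) *
      ip (a - 1) (b - 1) (JP (Suc n) (a - 1) (b - 1) * Lp (a/2) (b/2) (JP n (a - 1) (b - 1)))"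
    unfolding cc_def pn_def Lp_smult ip_lin_left[OF al' be'] by simp
  also have "ip (a - 1) (b - 1) (JP (Suc n) (a - 1) (b - 1) * Lp (a/2) (b/2) (JP n (a - 1) (b - 1))) =
      - (real n + a/2 + b/2) * lcf (a - 1) (b - 1) n * mom (a - 1) (b - 1) (Suc n)"
    unfolding ip_JP_low[OF al' be' d] coeff_Lp_top[OF degree_JP] lcf_def by (simp add: algebra_simps)
  finally show ?thesis by simp
qed

lemma cc_neg: "cc a b n < 0"
proof -
  have "0 < (real n + a/2 + b/2) * lcf (a - 1) (b - 1) n * mom (a - 1) (b - 1) (Suc n)
    / (sqrt (hh (a - 1) (b - 1) (Suc n)) * sqrt (hh (a - 1) (b - 1) n))"
    using a b lcf_pos[OF al' be'] mom_pos[OF al' be'] hh_pos[OF al' be'] by (intro divide_pos_pos mult_pos_pos) auto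
  moreover have "cc a b n = - ((real n + a/2 + b/2) * lcf (a - 1) (b - 1) n * mom (a - 1) (b - 1) (Suc n)
    / (sqrt (hh (a - 1) (b - 1) (Suc n)) * sqrt (hh (a - 1) (b - 1) n)))" unfolding cc_eq minus_mult_left minus_divide_left ..
  ultimately show ?thesis by linarith
qed

lemma cc_sq:
  assumes "n \<ge> 1"
  shows "(cc a b n)\<^sup>2 = (real n + 1) * (real n + a) * (real n + b) * (real n + a + b - 1)
     / ((2 * real n + a + b - 1) * (2 * real n + a + b + 1))"
proof -
  define L0 where "L0 = lcf (a - 1) (b - 1) n"
  define M0 where "M0 = mom (a - 1) (b - 1) n"
  define rL where "rL = (2 * real n + (a - 1) + (b - 1) + 1) * (2 * real n + (a - 1) + (b - 1) + 2) / (2 * (real n + 1) * (real n + (a - 1) + (b - 1) + 1))"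
  define rM where "rM = 2 * ((a - 1) + real n + 1) * ((b - 1) + real n + 1) / (((a - 1) + (b - 1) + 2 * real n + 2) * ((a - 1) + (b - 1) + 2 * real n + 3))"
  have L1: "lcf (a - 1) (b - 1) (Suc n) = L0 * rL" unfolding L0_def rL_def by (rule lcf_Suc[OF al' be' assms])
  have M1: "mom (a - 1) (b - 1) (Suc n) = M0 * rM" unfolding M0_def rM_def by (rule mom_Suc[OF al' be'])
  have L0p: "L0 > 0" unfolding L0_def by (rule lcf_pos[OF al' be'])
  have M0p: "M0 > 0" unfolding M0_def by (rule mom_pos[OF al' be'])
  have rLp: "rL > 0" unfolding rL_def using a b assms by (intro divide_pos_pos mult_pos_pos) auto
  have rMp: "rM > 0" unfolding rM_def using a b assms by (intro divide_pos_pos mult_pos_pos) auto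
  have h0: "hh (a - 1) (b - 1) n = L0 * M0" unfolding L0_def M0_def by (rule hh_eq[OF al' be'])
  have h1: "hh (a - 1) (b - 1) (Suc n) = (L0 * rL) * (M0 * rM)" unfolding L1[symmetric] M1[symmetric] by (rule hh_eq[OF al' be'])
  have "(cc a b n)\<^sup>2 = (real n + a/2 + b/2)\<^sup>2 * L0\<^sup>2 * (M0 * rM)\<^sup>2 / ((L0 * rL) * (M0 * rM) * (L0 * M0))"
    unfolding cc_eq L0_def[symmetric] M1 h0 h1 using L0p M0p rLp rMp
    by (simp add: power2_eq_square field_simps real_sqrt_mult[symmetric])
  also have "\<dots> = (real n + a/2 + b/2)\<^sup>2 * rM / rL"
    using L0p M0p rLp rMp by (simp add: power2_eq_square field_simps)
  also have "\<dots> = (real n + 1) * (real n + a) * (real n + b) * (real n + a + b - 1)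
     / ((2 * real n + a + b - 1) * (2 * real n + a + b + 1))"
  proof -
    define u where "u = 2 * real n + a + b"
    have u1: "u - 1 > 0" "u > 0" "u + 1 > 0" using a b assms by (auto simp: u_def)
    have C1: "real n + 1 > 0" "real n + a + b - 1 > 0" using a b assms by auto
    have rL': "rL = (u - 1) * u / (2 * (real n + 1) * (real n + a + b - 1))"
      unfolding rL_def u_def by (simp add: algebra_simps)
    have rM': "rM = 2 * (real n + a) * (real n + b) / (u * (u + 1))"
      unfolding rM_def u_def by (simp add: algebra_simps)
    have k': "real n + a/2 + b/2 = u / 2" unfolding u_def by simp
    have gen: "(u / 2)\<^sup>2 * (2 * A * B / (u * w)) / (v * u / (2 * C * D)) = A * B * C * D / (v * w)"
      if "v > 0" "u > 0" "w > 0" "C > 0" "D > 0" for A B C D v w :: real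
      using that u1 by (simp add: field_simps power2_eq_square)
    have "(real n + a/2 + b/2)\<^sup>2 * rM / rL = (real n + a) * (real n + b) * (real n + 1) * (real n + a + b - 1) / ((u - 1) * (u + 1))"
      unfolding rL' rM' k' by (rule gen[OF u1 C1])
    also have "\<dots> = (real n + 1) * (real n + a) * (real n + b) * (real n + a + b - 1)
     / ((2 * real n + a + b - 1) * (2 * real n + a + b + 1))"
      unfolding u_def by (simp add: algebra_simps)
    finally show ?thesis .
  qed
  finally show ?thesis .
qed

end


primrec qq :: "real \<Rightarrow> real \<Rightarrow> nat \<Rightarrow> real poly" where
  "qq a b 0 = smult (1 / cc a b 0) (pn a b 0)"
| "qq a b (Suc i) = smult (1 / cc a b (2 * i + 2)) (pn a b (2 * i + 2) + smult (cc a b (2 * i + 1)) (qq a b i))"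

definition Gp :: "real \<Rightarrow> real \<Rightarrow> nat \<Rightarrow> real poly" where
  "Gp a b n = (if odd n then smult (1 / sqrt 2) (pn a b n) else smult (- 1 / sqrt 2) (qq a b (n div 2)))"

definition Mstd :: "nat \<Rightarrow> nat \<Rightarrow> real" where
  "Mstd j k = (if even j then (if k = Suc j then 1 else 0) else (if Suc k = j then -1 else 0))"

lemma Lp_minus: "Lp s t (- p) = - Lp s t p"
  using Lp_smult[of s t "-1" p] by simp

context
  fixes a b :: real
  assumes a: "a > 0" and b: "b > 0"
begin

lemma al'': "a - 1 > -1" and be'': "b - 1 > -1" using a b by auto

lemmas ipl' = ip_lin_left[OF al'' be'']

lemma cc_ne: "cc a b n \<noteq> 0" using cc_neg[OF a b, of n] by simp

lemma three_term': "Lp (a/2) (b/2) (pn a b n) = smult (cc a b n) (pn a b (Suc n)) - (if n = 0 then 0 else smult (cc a b (n - 1)) (pn a b (n - 1)))"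
  by (rule three_term[OF a b])

lemma Lw_qq: "Lp (a/2) (b/2) (qq a b i) = pn a b (2 * i + 1)"
proof (induction i)
  case 0
  show ?case using cc_ne[of 0] by (simp add: Lp_smult three_term')
next
  case (Suc i)
  have t: "Lp (a/2) (b/2) (pn a b (2 * i + 2)) = smult (cc a b (2 * i + 2)) (pn a b (2 * i + 3)) - smult (cc a b (2 * i + 1)) (pn a b (2 * i + 1))"
    using three_term'[of "2 * i + 2"] by (simp add: numeral_3_eq_3)
  have "Lp (a/2) (b/2) (qq a b (Suc i)) = smult (1 / cc a b (2 * i + 2)) (smult (cc a b (2 * i + 2)) (pn a b (2 * i + 3)))"
    unfolding qq.simps Lp_smult Lp_add t Suc.IH by simp
  then show ?case using cc_ne[of "2 * i + 2"] by (simp add: numeral_3_eq_3)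
qed

lemma pn_even: "pn a b (2 * m) = smult (cc a b (2 * m)) (qq a b m) - (if m = 0 then 0 else smult (cc a b (2 * m - 1)) (qq a b (m - 1)))"
proof (cases m)
  case 0
  then show ?thesis using cc_ne[of 0] by simp
next
  case (Suc i)
  have e1: "2 * m = 2 * i + 2" "2 * m - 1 = 2 * i + 1" using Suc by auto
  show ?thesis unfolding e1 using Suc cc_ne[of "2 * i + 2"] by (simp add: smult_add_right)
qed

lemma qq_orth: "ip (a - 1) (b - 1) (qq a b i * pn a b (2 * l + 1)) = 0"
proof (induction i)
  case 0
  show ?case unfolding qq.simps ipl' pn_orth[OF a b] by simp
next
  case (Suc i)
  have ne: "Suc (2 * i) \<noteq> 2 * l" by presburger
  show ?case unfolding qq.simps ipl' pn_orth[OF a b] Suc.IH using ne by simp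
qed

lemma skew': "ip (a - 1) (b - 1) (f * Lp (a/2) (b/2) g) = - ip (a - 1) (b - 1) (Lp (a/2) (b/2) f * g)"
  by (rule skew[OF a b])

lemma Gp_M: "2 * ip (a - 1) (b - 1) (Gp a b j * Lp (a/2) (b/2) (Gp a b k)) = Mstd j k"
proof -
  have s2: "(1 / sqrt 2) * (1 / sqrt 2) = (1/2::real)" by (simp add: real_sqrt_mult[symmetric])
  consider "odd j" "odd k" | "even j" "even k" | "even j" "odd k" | "odd j" "even k" by blast
  then show ?thesis
  proof cases
    case 1
    then obtain l where l: "k = Suc (2 * l)" by (metis oddE Suc_eq_plus1)
    have "2 * ip (a - 1) (b - 1) (Gp a b j * Lp (a/2) (b/2) (Gp a b k)) =
        ip (a - 1) (b - 1) (pn a b j * Lp (a/2) (b/2) (pn a b k))"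
      unfolding Gp_def using 1 by (simp add: Lp_smult Lp_minus ip_uminus ipl' ip_smult s2 mult.assoc[symmetric])
    also have "\<dots> = 0" unfolding three_term' l ipl' pn_orth[OF a b] using 1 by (auto simp: ip_smult pn_orth[OF a b])
    moreover have "Suc k \<noteq> j" using 1 by presburger
    ultimately show ?thesis using 1 by (simp add: Mstd_def)
  next
    case 2
    then obtain i l where il: "j = 2 * i" "k = 2 * l" by (metis evenE)
    have "2 * ip (a - 1) (b - 1) (Gp a b j * Lp (a/2) (b/2) (Gp a b k)) =
        ip (a - 1) (b - 1) (qq a b i * Lp (a/2) (b/2) (qq a b l))"
      unfolding Gp_def using il by (simp add: Lp_smult Lp_minus ip_uminus ipl' ip_smult s2 mult.assoc[symmetric])
    also have "\<dots> = 0" unfolding Lw_qq qq_orth ..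
    moreover have "k \<noteq> Suc j" using 2 by presburger
    ultimately show ?thesis using 2 by (simp add: Mstd_def)
  next
    case 3
    then obtain i where i: "j = 2 * i" by (metis evenE)
    have "2 * ip (a - 1) (b - 1) (Gp a b j * Lp (a/2) (b/2) (Gp a b k)) =
        - ip (a - 1) (b - 1) (qq a b i * Lp (a/2) (b/2) (pn a b k))"
      unfolding Gp_def using 3 i by (simp add: Lp_smult Lp_minus ip_uminus ipl' ip_smult s2 mult.assoc[symmetric])
    also have "\<dots> = ip (a - 1) (b - 1) (pn a b (2 * i + 1) * pn a b k)"
      unfolding skew' Lw_qq by simp
    also have "\<dots> = Mstd j k" unfolding pn_orth[OF a b] Mstd_def using 3 i by auto
    finally show ?thesis .
  next
    case 4
    then obtain l where l: "k = 2 * l" by (metis evenE)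
    have "2 * ip (a - 1) (b - 1) (Gp a b j * Lp (a/2) (b/2) (Gp a b k)) =
        - ip (a - 1) (b - 1) (pn a b j * Lp (a/2) (b/2) (qq a b l))"
      unfolding Gp_def using 4 l by (simp add: Lp_smult Lp_minus ip_uminus ipl' ip_smult s2 mult.assoc[symmetric])
    also have "\<dots> = - ip (a - 1) (b - 1) (pn a b j * pn a b (2 * l + 1))"
      unfolding Lw_qq ..
    also have "\<dots> = Mstd j k" unfolding pn_orth[OF a b] Mstd_def using 4 l by auto
    finally show ?thesis .
  qed
qed

end


lemma pair_sum: "(\<Sum>j<2 * (N::nat). f j) = (\<Sum>i<N. f (2 * i) + f (2 * i + 1))"
  by (induction N) (auto simp: sum.distrib add_ac)

lemma alg_identity:
  fixes P Q R c :: "nat \<Rightarrow> real"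
  assumes hP: "\<And>m. P (2 * m) = c (2 * m) * Q m - (if m = 0 then 0 else c (2 * m - 1) * Q (m - 1))"
  shows "(\<Sum>i<N. - Q i * (c (2 * i + 1) * R (2 * i + 2) - c (2 * i) * R (2 * i)) + P (2 * i + 1) * R (2 * i + 1))
        = (\<Sum>j\<le>2 * N. P j * R j) - c (2 * N) * Q N * R (2 * N)"
proof (induction N)
  case 0
  show ?case using hP[of 0] by simp
next
  case (Suc N)
  have e: "2 * Suc N = Suc (Suc (2 * N))" by simp
  have p2: "P (2 * N + 2) = c (2 * N + 2) * Q (Suc N) - c (2 * N + 1) * Q N"
    using hP[of "Suc N"] by (simp add: e)
  have e2: "2 * N + 2 = Suc (Suc (2 * N))" "2 * N + 1 = Suc (2 * N)" by simp_all
  have p3: "P (Suc (Suc (2 * N))) = c (Suc (Suc (2 * N))) * Q (Suc N) - c (Suc (2 * N)) * Q N"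
    using p2 unfolding e2 .
  show ?case unfolding sum.lessThan_Suc Suc.IH e sum.atMost_Suc e2 p3
    by (simp add: algebra_simps)
qed


lemma Mstd_even: "even j \<Longrightarrow> Mstd j k = (if k = Suc j then 1 else 0)"
  by (simp add: Mstd_def)

lemma Mstd_odd: "odd j \<Longrightarrow> Mstd j k = (if Suc k = j then -1 else 0)"
  by (simp add: Mstd_def)

lemma rowsum:
  assumes "j < 2 * N"
  shows "(\<Sum>k<2 * N. Mstd j k * X k) = (if even j then X (Suc j) else - X (j - 1))"
proof (cases "even j")
  case True
  have sj: "Suc j < 2 * N" using assms True by presburger
  have "(\<Sum>k<2 * N. Mstd j k * X k) = (\<Sum>k<2 * N. if k = Suc j then X k else 0)"
    by (rule sum.cong[OF refl]) (simp add: Mstd_even[OF True])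
  also have "\<dots> = X (Suc j)" using sj by simp
  finally show ?thesis using True by simp
next
  case False
  then have j1: "j \<ge> 1" by (cases j) auto
  have "(\<Sum>k<2 * N. Mstd j k * X k) = (\<Sum>k<2 * N. if k = j - 1 then - X k else 0)"
  proof (rule sum.cong[OF refl])
    fix k
    have "(Suc k = j) = (k = j - 1)" using j1 by auto
    then show "Mstd j k * X k = (if k = j - 1 then - X k else 0)" by (simp add: Mstd_odd[OF False])
  qed
  also have "\<dots> = - X (j - 1)" using assms by simp
  finally show ?thesis using False by simp
qed

lemma colsum:
  assumes "l < 2 * N"
  shows "(\<Sum>k<2 * N. X k * Mstd k l) = (if even l then - X (Suc l) else X (l - 1))"
proof (cases "even l")
  case True
  have sl: "Suc l < 2 * N" using assms True by presburger
  have "(\<Sum>k<2 * N. X k * Mstd k l) = (\<Sum>k<2 * N. if k = Suc l then - X k else 0)"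
  proof (rule sum.cong[OF refl])
    fix k show "X k * Mstd k l = (if k = Suc l then - X k else 0)"
    proof (cases "even k")
      case ek: True
      have "l \<noteq> Suc k" using True ek by auto
      moreover have "k \<noteq> Suc l" using True ek by auto
      ultimately show ?thesis by (simp add: Mstd_even[OF ek])
    next
      case ok: False
      show ?thesis by (simp add: Mstd_odd[OF ok] eq_commute)
    qed
  qed
  also have "\<dots> = - X (Suc l)" using sl by simp
  finally show ?thesis using True by simp
next
  case False
  then have l1: "l \<ge> 1" by (cases l) auto
  have "(\<Sum>k<2 * N. X k * Mstd k l) = (\<Sum>k<2 * N. if k = l - 1 then X k else 0)"
  proof (rule sum.cong[OF refl])
    fix k show "X k * Mstd k l = (if k = l - 1 then X k else 0)"
    proof (cases "even k")
      case ek: True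
      have "(l = Suc k) = (k = l - 1)" using l1 by auto
      then show ?thesis by (simp add: Mstd_even[OF ek])
    next
      case ok: False
      have "Suc l \<noteq> k" using False ok by auto
      moreover have "k \<noteq> l - 1" using False ok l1 by (metis Suc_diff_1 even_Suc less_le_trans zero_less_one)
      ultimately show ?thesis by (simp add: Mstd_odd[OF ok])
    qed
  qed
  also have "\<dots> = X (l - 1)" using assms by simp
  finally show ?thesis using False by simp
qed

lemma Mstd_inverse: "is_inverse_matrix (2 * N) Mstd (\<lambda>j k. - Mstd j k)"
  unfolding is_inverse_matrix_def
proof (intro conjI allI impI)
  fix i l assume i: "i < 2 * N" and l: "l < 2 * N"
  show "(\<Sum>k<2 * N. Mstd i k * - Mstd k l) = (if i = l then 1 else 0)"
  proof (cases "even i")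
    case True
    have o: "odd (Suc i)" using True by simp
    show ?thesis unfolding rowsum[OF i] using True by (simp add: Mstd_odd[OF o])
  next
    case False
    then obtain i' where i': "i = Suc i'" by (cases i) auto
    have o: "even i'" using False i' by simp
    have "(l = i) = (i = l)" by auto
    then show ?thesis unfolding rowsum[OF i] using False i' by (simp add: Mstd_even[OF o])
  qed
  show "(\<Sum>k<2 * N. - Mstd i k * Mstd k l) = (if i = l then 1 else 0)"
  proof (cases "even l")
    case True
    show ?thesis
    proof (cases "even i")
      case ei: True
      show ?thesis unfolding colsum[OF l] using True by (simp add: Mstd_even[OF ei] eq_commute)
    next
      case oi: False
      have "Suc (Suc l) \<noteq> i" using True oi by auto
      moreover have "i \<noteq> l" using True oi by auto
      ultimately show ?thesis unfolding colsum[OF l] using True by (simp add: Mstd_odd[OF oi])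
    qed
  next
    case False
    then have l1: "l \<ge> 1" by (cases l) auto
    show ?thesis
    proof (cases "even i")
      case ei: True
      obtain l' where l': "l = Suc l'" using l1 by (cases l) auto
      have "l' \<noteq> Suc i" using False ei l' by auto
      moreover have "i \<noteq> l" using False ei by auto
      ultimately show ?thesis unfolding colsum[OF l] using False l' by (simp add: Mstd_even[OF ei])
    next
      case oi: False
      obtain l' where l': "l = Suc l'" using l1 by (cases l) auto
      have "(Suc l' = i) = (i = l)" using l' by auto
      then show ?thesis unfolding colsum[OF l] using False l' by (simp add: Mstd_odd[OF oi])
    qed
  qed
qed

lemma Mstd_inverse_unique:
  assumes "is_inverse_matrix (2 * N) Mstd mu" "j < 2 * N" "l < 2 * N"
  shows "mu j l = - Mstd j l"
proof -
  have r: "(\<Sum>k<2 * N. Mstd i k * mu k l) = (if i = l then 1 else 0)" if "i < 2 * N" for i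
    using assms(1) that assms(3) unfolding is_inverse_matrix_def by blast
  show ?thesis
  proof (cases "even j")
    case True
    have sj: "Suc j < 2 * N" using assms(2) True by presburger
    have o: "odd (Suc j)" using True by simp
    have "- mu j l = (if Suc j = l then 1 else 0)"
      using r[OF sj] unfolding rowsum[OF sj] using o by simp
    then show ?thesis by (simp add: Mstd_even[OF True] eq_commute split: if_splits)
  next
    case False
    then obtain j' where j': "j = Suc j'" by (cases j) auto
    have sj: "j' < 2 * N" using assms(2) j' by simp
    have o: "even j'" using False j' by simp
    have "mu j l = (if j' = l then 1 else 0)"
      using r[OF sj] unfolding rowsum[OF sj] using o j' by simp
    moreover have "(j' = l) = (Suc l = j)" using j' by auto
    ultimately show ?thesis by (simp add: Mstd_odd[OF False])
  qed
qed


context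
  fixes a b :: real
  assumes a: "a > 0" and b: "b > 0"
begin

lemma jacobi_h_eq: "jacobi_h j (a - 1) (b - 1) = hh (a - 1) (b - 1) j"
  unfolding jacobi_h_def hh_def ip_LBINT
  by (simp add: rho_def poly_JP power2_eq_square mult_ac)

lemma phi4_eq: "phi4 a b j x = rho (a/2 - 1) (b/2 - 1) x * poly (pn a b j) x"
  unfolding phi4_def pn_def jacobi_h_eq rho_def by (simp add: poly_JP)

lemma phi4_fun: "phi4 a b j = (\<lambda>x. rho (a/2 - 1) (b/2 - 1) x * poly (pn a b j) x)"
  by (rule ext) (rule phi4_eq)

lemma eps_phi:
  assumes x: "-1 < x" "x < 1"
  shows "eps_op (phi4 a b (2 * i + 1)) x = rho (a/2) (b/2) x * poly (qq a b i) x"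
proof (rule eps_op_FTC[where F = "\<lambda>x. rho (a/2) (b/2) x * poly (qq a b i) x"])
  fix y :: real assume y: "-1 < y" "y < 1"
  have "((\<lambda>x. rho (a/2) (b/2) x * poly (qq a b i) x) has_real_derivative
      rho (a/2 - 1) (b/2 - 1) y * poly (Lp (a/2) (b/2) (qq a b i)) y) (at y)"
    by (rule DERIV_rho_poly[OF y])
  then show "((\<lambda>x. rho (a/2) (b/2) x * poly (qq a b i) x) has_real_derivative phi4 a b (2 * i + 1) y) (at y)"
    unfolding Lw_qq[OF a b] phi4_eq .
  show "isCont (phi4 a b (2 * i + 1)) y"
    unfolding phi4_fun using y by (auto simp: rho_def intro!: continuous_intros)
next
  show "set_integrable lborel {-1<..<1} (phi4 a b (2 * i + 1))"
    unfolding phi4_fun using a b by (intro int_rho_poly) auto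
  show "((\<lambda>x. rho (a/2) (b/2) x * poly (qq a b i) x) \<longlongrightarrow> 0) (at_right (-1))"
    using b by (intro rho_tendsto_right[where L = "poly (qq a b i) (-1)"]) (auto intro!: tendsto_eq_intros)
  show "((\<lambda>x. rho (a/2) (b/2) x * poly (qq a b i) x) \<longlongrightarrow> 0) (at_left 1)"
    using a by (intro rho_tendsto_left[where L = "poly (qq a b i) 1"]) (auto intro!: tendsto_eq_intros)
qed (use x in auto)

lemma psi4_eq:
  assumes x: "-1 < x" "x < 1"
  shows "psi4 a b n x = rho (a/2) (b/2) x * poly (Gp a b n) x"
proof (cases "odd n")
  case True
  have r: "rho (a/2 - 1) (b/2 - 1) x * (1 - x\<^sup>2) = rho (a/2) (b/2) x"
    using rho_1mx2[OF x, of "a/2 - 1" "b/2 - 1"] by simp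
  have "psi4 a b n x = (1 / sqrt 2) * (rho (a/2 - 1) (b/2 - 1) x * (1 - x\<^sup>2)) * poly (pn a b n) x"
    unfolding psi4_def phi4_eq using True by (simp add: mult_ac)
  then show ?thesis unfolding r Gp_def using True by (simp add: mult_ac)
next
  case False
  then obtain i where i: "n = 2 * i" by (metis evenE)
  have "psi4 a b n x = - (1 / sqrt 2) * eps_op (phi4 a b (2 * i + 1)) x"
    unfolding psi4_def using False i by simp
  then show ?thesis unfolding eps_phi[OF x] Gp_def using False i by (simp add: mult_ac)
qed

lemma deriv_psi4:
  assumes x: "-1 < x" "x < 1"
  shows "deriv (psi4 a b n) x = rho (a/2 - 1) (b/2 - 1) x * poly (Lp (a/2) (b/2) (Gp a b n)) x"
proof -
  have "((\<lambda>x. rho (a/2) (b/2) x * poly (Gp a b n) x) has_real_derivative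
      rho (a/2 - 1) (b/2 - 1) x * poly (Lp (a/2) (b/2) (Gp a b n)) x) (at x)"
    by (rule DERIV_rho_poly[OF x])
  then have "(psi4 a b n has_real_derivative rho (a/2 - 1) (b/2 - 1) x * poly (Lp (a/2) (b/2) (Gp a b n)) x) (at x)"
    by (rule has_field_derivative_transform_within_open[where S = "{-1<..<1}"]) (use x psi4_eq in auto)
  then show ?thesis by (rule DERIV_imp_deriv)
qed

lemma M4_eq: "M4 a b j k = Mstd j k"
proof -
  let ?G = "Gp a b" and ?L = "Lp (a/2) (b/2)"
  have "M4 a b j k = ip (a - 1) (b - 1) (?G j * ?L (?G k) - ?G k * ?L (?G j))"
    unfolding M4_def ip_LBINT
  proof (rule interval_integral_cong)
    fix x assume "x \<in> einterval (min (ereal (-1)) (ereal 1)) (max (ereal (-1)) (ereal 1))"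
    then have x: "-1 < x" "x < 1" by auto
    have r: "rho (a/2) (b/2) x * rho (a/2 - 1) (b/2 - 1) x = rho (a - 1) (b - 1) x"
      using rho_mult[OF x, of "a/2" "b/2" "a/2 - 1" "b/2 - 1"] by simp
    show "psi4 a b j x * deriv (psi4 a b k) x - psi4 a b k x * deriv (psi4 a b j) x =
        rho (a - 1) (b - 1) x * poly (?G j * ?L (?G k) - ?G k * ?L (?G j)) x"
      unfolding psi4_eq[OF x] deriv_psi4[OF x] r[symmetric] by (simp add: algebra_simps)
  qed
  also have "\<dots> = ip (a - 1) (b - 1) (?G j * ?L (?G k)) - ip (a - 1) (b - 1) (?G k * ?L (?G j))"
    using a b by (simp add: ip_diff)
  also have "ip (a - 1) (b - 1) (?G k * ?L (?G j)) = - ip (a - 1) (b - 1) (?G j * ?L (?G k))"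
    using skew'[OF a b, of "?G k" "?G j"] by (simp add: mult.commute)
  also have "ip (a - 1) (b - 1) (?G j * ?L (?G k)) - - ip (a - 1) (b - 1) (?G j * ?L (?G k)) = Mstd j k"
    using Gp_M[OF a b, of j k] by simp
  finally show ?thesis .
qed

lemma M4_fun: "M4 a b = Mstd"
  by (intro ext) (rule M4_eq)

lemma C4_eq:
  assumes "N \<ge> 1"
  shows "C4 a b N = - cc a b (2 * N)"
proof -
  have n1: "2 * N \<ge> 1" using assms by simp
  have sq: "(cc a b (2 * N))\<^sup>2 = (2 * real N + 1) * (2 * real N + a) * (2 * real N + b) * (2 * real N + a + b - 1)
     / ((4 * real N + a + b + 1) * (4 * real N + a + b - 1))"
    using cc_sq[OF a b n1] by (simp add: mult_ac)
  have "C4 a b N = sqrt ((cc a b (2 * N))\<^sup>2)" unfolding sq C4_def by simp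
  also have "\<dots> = - cc a b (2 * N)" using cc_neg[OF a b, of "2 * N"] by simp
  finally show ?thesis .
qed

end


theorem lemma2:
  fixes a b :: real and N :: nat
  assumes "a > 0" and "b > 0" and "N \<ge> 1"
  shows "(\<exists>mu. is_inverse_matrix (2*N) (M4 a b) mu) \<and>
         (\<forall>mu. is_inverse_matrix (2*N) (M4 a b) mu \<longrightarrow>
            (\<forall>x\<in>{-1<..<1}. \<forall>y\<in>{-1<..<1}.
               K4 a b N mu x y
                 = (1/2) * S4 a b N x y
                   + (1/2) * C4 a b N * eps_op (phi4 a b (2*N+1)) x * phi4 a b (2*N) y))"
proof -
  note a = assms(1) and b = assms(2)
  have ex: "\<exists>mu. is_inverse_matrix (2*N) (M4 a b) mu"
    unfolding M4_fun[OF a b] using Mstd_inverse by blast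
  have main: "K4 a b N mu x y
                 = (1/2) * S4 a b N x y
                   + (1/2) * C4 a b N * eps_op (phi4 a b (2*N+1)) x * phi4 a b (2*N) y"
    if inv: "is_inverse_matrix (2*N) (M4 a b) mu" and x: "x \<in> {-1<..<1}" and y: "y \<in> {-1<..<1}" for mu x y
  proof -
    have inv': "is_inverse_matrix (2*N) Mstd mu" using inv by (simp add: M4_fun[OF a b])
    have xx: "-1 < x" "x < 1" and yy: "-1 < y" "y < 1" using x y by auto
    define W where "W = rho (a/2) (b/2) x"
    define w where "w = rho (a/2 - 1) (b/2 - 1) y"
    define P where "P j = poly (pn a b j) x" for j
    define Q where "Q i = poly (qq a b i) x" for i
    define R where "R j = poly (pn a b j) y" for j
    define c where "c = cc a b"
    define s :: real where "s = 1 / sqrt 2"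
    have ss: "s * s = 1/2" unfolding s_def by (simp add: real_sqrt_mult[symmetric])
    have psi_e: "psi4 a b (2 * i) x = W * (- s) * Q i" for i
      unfolding psi4_eq[OF a b xx] Gp_def W_def Q_def s_def by simp
    have psi_o: "psi4 a b (2 * i + 1) x = W * s * P (2 * i + 1)" for i
      unfolding psi4_eq[OF a b xx] Gp_def W_def P_def s_def by simp
    have dpsi_e: "deriv (psi4 a b (2 * i)) y = w * (- s) * R (2 * i + 1)" for i
      unfolding deriv_psi4[OF a b yy] Gp_def w_def R_def s_def by (simp add: Lp_smult Lp_minus Lw_qq[OF a b])
    have dpsi_o: "deriv (psi4 a b (2 * i + 1)) y = w * s * (c (2 * i + 1) * R (2 * i + 2) - c (2 * i) * R (2 * i))" for i
    proof -
      have t: "Lp (a/2) (b/2) (pn a b (2 * i + 1)) = smult (cc a b (2 * i + 1)) (pn a b (2 * i + 2)) - smult (cc a b (2 * i)) (pn a b (2 * i))"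
        using three_term'[OF a b, of "2 * i + 1"] by simp
      have G: "Gp a b (2 * i + 1) = smult s (pn a b (2 * i + 1))" by (simp add: Gp_def s_def)
      show ?thesis
        unfolding deriv_psi4[OF a b yy] G Lp_smult t by (simp add: w_def R_def c_def algebra_simps)
    qed
    have hP: "P (2 * m) = c (2 * m) * Q m - (if m = 0 then 0 else c (2 * m - 1) * Q (m - 1))" for m
      unfolding P_def Q_def c_def by (subst pn_even[OF a b]) simp
    define D where "D k = deriv (psi4 a b k) y" for k
    have "K4 a b N mu x y = - (\<Sum>j<2*N. psi4 a b j x * (\<Sum>k<2*N. mu j k * D k))"
      unfolding K4_def D_def by (simp add: sum_distrib_left mult_ac)
    also have "\<dots> = (\<Sum>j<2*N. psi4 a b j x * (\<Sum>k<2*N. Mstd j k * D k))"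
    proof -
      have mj: "(\<Sum>k<2*N. mu j k * D k) = - (\<Sum>k<2*N. Mstd j k * D k)" if "j < 2 * N" for j
      proof -
        have "(\<Sum>k<2*N. mu j k * D k) = (\<Sum>k<2*N. - (Mstd j k * D k))"
          by (rule sum.cong[OF refl]) (simp add: Mstd_inverse_unique[OF inv' that])
        then show ?thesis by (simp add: sum_negf)
      qed
      have "(\<Sum>j<2*N. psi4 a b j x * (\<Sum>k<2*N. mu j k * D k)) = (\<Sum>j<2*N. - (psi4 a b j x * (\<Sum>k<2*N. Mstd j k * D k)))"
        by (rule sum.cong[OF refl]) (simp add: mj)
      then show ?thesis by (simp add: sum_negf)
    qed
    also have "\<dots> = (\<Sum>j<2*N. psi4 a b j x * (if even j then D (Suc j) else - D (j - 1)))"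
      by (rule sum.cong[OF refl]) (simp add: rowsum)
    also have "\<dots> = (\<Sum>i<N. psi4 a b (2 * i) x * D (2 * i + 1) - psi4 a b (2 * i + 1) x * D (2 * i))"
      unfolding pair_sum by simp
    also have "\<dots> = (\<Sum>i<N. (W * w / 2) * (- Q i * (c (2 * i + 1) * R (2 * i + 2) - c (2 * i) * R (2 * i)) + P (2 * i + 1) * R (2 * i + 1)))"
    proof (rule sum.cong[OF refl])
      fix i
      have "psi4 a b (2 * i) x * D (2 * i + 1) - psi4 a b (2 * i + 1) x * D (2 * i) =
          (W * w * (s * s)) * (- Q i * (c (2 * i + 1) * R (2 * i + 2) - c (2 * i) * R (2 * i)) + P (2 * i + 1) * R (2 * i + 1))"
        unfolding D_def psi_e psi_o dpsi_e dpsi_o by (simp add: algebra_simps)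
      then show "psi4 a b (2 * i) x * D (2 * i + 1) - psi4 a b (2 * i + 1) x * D (2 * i) =
          (W * w / 2) * (- Q i * (c (2 * i + 1) * R (2 * i + 2) - c (2 * i) * R (2 * i)) + P (2 * i + 1) * R (2 * i + 1))"
        unfolding ss by simp
    qed
    also have "\<dots> = (W * w / 2) * ((\<Sum>j\<le>2 * N. P j * R j) - c (2 * N) * Q N * R (2 * N))"
      unfolding sum_distrib_left[symmetric] alg_identity[of P c Q, OF hP] ..
    also have "\<dots> = (1/2) * S4 a b N x y + (1/2) * C4 a b N * eps_op (phi4 a b (2*N+1)) x * phi4 a b (2*N) y"
    proof -
      have S: "S4 a b N x y = (\<Sum>j\<le>2 * N. (W * P j) * (w * R j))"
      proof -
        have "(1 - x\<^sup>2) * phi4 a b j x * phi4 a b j y = (W * P j) * (w * R j)" for j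
        proof -
          have r: "rho (a/2 - 1) (b/2 - 1) x * (1 - x\<^sup>2) = W"
            using rho_1mx2[OF xx, of "a/2 - 1" "b/2 - 1"] by (simp add: W_def)
          show ?thesis unfolding phi4_eq[OF a b] P_def R_def w_def r[symmetric] by (simp add: mult_ac)
        qed
        then show ?thesis unfolding S4_def by simp
      qed
      have E: "eps_op (phi4 a b (2*N+1)) x = W * Q N"
        unfolding eps_phi[OF a b xx] W_def Q_def ..
      have Ph: "phi4 a b (2*N) y = w * R (2 * N)"
        unfolding phi4_eq[OF a b] w_def R_def ..
      have C: "C4 a b N = - c (2 * N)" unfolding c_def by (rule C4_eq[OF a b assms(3)])
      show ?thesis unfolding S E Ph C
        by (simp add: sum_distrib_left algebra_simps)
    qed
    finally show ?thesis .
  qed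
  show ?thesis using ex main by blast
qed


end
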